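(* Let $A_0,\dots,A_n$ be any hyperplanes in $\mathbb P^n$ over a field $F$, and let $f_i$ be a rational function with divisor $A_i-A_0$ ($i=1,\dots,n$). Then the class of $\{f_1,\dots,f_n\}$ in $K^M_n(F(\mathbb P^n))/F^*\cdot K^M_{n-1}(F(\mathbb P^n))$ is nonzero if and only if the hyperplanes are in generic position.
   Context: $K^M_n$ is Milnor $K$-theory, $F(\mathbb P^n)$ the function field, and $F^*\cdot K^M_{n-1}(F(\mathbb P^n))$ the subgroup generated by symbols $\{c\}\cdot\alpha$ with $c\in F^*$ a constant and $\alpha\in K^M_{n-1}(F(\mathbb P^n))$ (so the class does not depend on the choice of the $f_i$). The $n+1$ hyperplanes are in generic position if their linear equations are linearly independent, i.e. their intersection is empty. *)

theory Defs
  imports Main "HOL-Library.Poly_Mapping" "HOL-Computational_Algebra.Fraction_Field"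
begin

inductive_set zgen :: "'b::ab_group_add set \<Rightarrow> 'b set" for S where
  zgen_zero: "0 \<in> zgen S"
| zgen_gen: "x \<in> S \<Longrightarrow> x \<in> zgen S"
| zgen_diff: "x \<in> zgen S \<Longrightarrow> y \<in> zgen S \<Longrightarrow> x - y \<in> zgen S"

text \<open>The free abelian group on n-tuples (lists) of elements of a field 'k is
  'k list =>0 int; the generator of a tuple xs is symb xs.  K^M_n(k) is the
  quotient of the subgroup spanned by tuples of length n with nonzero entries
  by the subgroup generated by the multilinearity and Steinberg relations.\<close>

definition symb :: "'k list \<Rightarrow> ('k list \<Rightarrow>\<^sub>0 int)" where
  "symb xs = Poly_Mapping.single xs 1"

definition units_list :: "nat \<Rightarrow> 'k::field list set" where
  "units_list m = {xs. length xs = m \<and> (\<forall>x\<in>set xs. x \<noteq> 0)}"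

definition milnor_rel :: "nat \<Rightarrow> ('k::field list \<Rightarrow>\<^sub>0 int) set" where
  "milnor_rel n =
     {symb (xs @ [a * b] @ ys) - symb (xs @ [a] @ ys) - symb (xs @ [b] @ ys) | xs ys a b.
        xs \<in> units_list (length xs) \<and> ys \<in> units_list (length ys) \<and>
        length xs + 1 + length ys = n \<and> a \<noteq> 0 \<and> b \<noteq> 0}
   \<union> {symb (xs @ [a, 1 - a] @ ys) | xs ys a.
        xs \<in> units_list (length xs) \<and> ys \<in> units_list (length ys) \<and>
        length xs + 2 + length ys = n \<and> a \<noteq> 0 \<and> a \<noteq> 1}"

text \<open>Generators of C^* . K^M_{n-1}(k) inside K^M_n(k), for a set C of constants:
  the symbols {c, y_2, ..., y_n} with c in C nonzero.\<close>

definition const_syms :: "'k::field set \<Rightarrow> nat \<Rightarrow> ('k list \<Rightarrow>\<^sub>0 int) set" where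
  "const_syms C n = {symb (c # ys) | c ys. c \<in> C \<and> c \<noteq> 0 \<and> ys \<in> units_list (n - 1)}"

definition nonzero_class_mod_const :: "'k::field set \<Rightarrow> 'k list \<Rightarrow> bool" where
  "nonzero_class_mod_const C xs \<longleftrightarrow>
     symb xs \<notin> zgen (milnor_rel (length xs) \<union> const_syms C (length xs))"

section \<open>The function field F(P^n) = F(x_v : v in 'v), n = CARD('v)\<close>

type_synonym ('v, 'a) mpoly = "('v \<Rightarrow>\<^sub>0 nat) \<Rightarrow>\<^sub>0 'a"

definition const_fun :: "'a::field \<Rightarrow> ('v::{finite,linorder}, 'a) mpoly fract" where
  "const_fun c = Fract (Poly_Mapping.single 0 c) 1"

text \<open>Affine chart X_None = 1 of P^n with homogeneous coordinates indexed by 'v option.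
  The hyperplane with coefficient vector a has (dehomogenized) equation
  a None + sum_v a (Some v) x_v.\<close>

definition lin_form :: "('v::{finite,linorder} option \<Rightarrow> 'a::field) \<Rightarrow> ('v, 'a) mpoly" where
  "lin_form a = Poly_Mapping.single 0 (a None)
     + (\<Sum>v\<in>UNIV. Poly_Mapping.single (Poly_Mapping.single v 1) (a (Some v)))"

definition lin_indep_vecs :: "nat \<Rightarrow> (nat \<Rightarrow> 'j \<Rightarrow> 'a::field) \<Rightarrow> bool" where
  "lin_indep_vecs n a \<longleftrightarrow>
     (\<forall>l::nat \<Rightarrow> 'a. (\<forall>j. (\<Sum>i\<le>n. l i * a i j) = 0) \<longrightarrow> (\<forall>i\<le>n. l i = 0))"

end

theory Submission
  imports Defs "Jordan_Normal_Form.Determinant" "HOL-Library.Function_Algebras"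
begin

hide_const (open) Rat.Fract


definition RR :: "'k::field set \<Rightarrow> nat \<Rightarrow> ('k list \<Rightarrow>\<^sub>0 int) set" where
  "RR C n = zgen (milnor_rel n \<union> const_syms C n)"

lemma zgen_add: "x \<in> zgen S \<Longrightarrow> y \<in> zgen S \<Longrightarrow> x + y \<in> zgen S"
proof -
  assume a: "x \<in> zgen S" "y \<in> zgen S"
  have "0 - y \<in> zgen S" by (rule zgen_diff[OF zgen_zero a(2)])
  from zgen_diff[OF a(1) this] show ?thesis by simp
qed

lemma zgen_uminus: "x \<in> zgen S \<Longrightarrow> - x \<in> zgen S"
  using zgen_diff[OF zgen_zero, of x S] by simp

lemma zgen_diff': "x \<in> zgen S \<Longrightarrow> y \<in> zgen S \<Longrightarrow> x - y \<in> zgen S"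
  by (rule zgen_diff)

lemma zgen_mono: assumes "S \<subseteq> T" "x \<in> zgen S" shows "x \<in> zgen T"
  using assms(2) by (induction rule: zgen.induct) (use assms(1) in \<open>auto intro: zgen.intros\<close>)

lemma units_list_iff: "xs \<in> units_list m \<longleftrightarrow> length xs = m \<and> (\<forall>x\<in>set xs. x \<noteq> 0)"
  by (simp add: units_list_def)

definition uni :: "'k::field list \<Rightarrow> bool" where
  "uni xs \<longleftrightarrow> (\<forall>x\<in>set xs. x \<noteq> 0)"

lemma uni_nth: "uni xs \<Longrightarrow> i < length xs \<Longrightarrow> xs ! i \<noteq> 0"
  by (simp add: uni_def)

lemma uni_upd: "uni xs \<Longrightarrow> v \<noteq> 0 \<Longrightarrow> uni (xs[i:=v])"
  unfolding uni_def using set_update_subset_insert[of xs i v] by blast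

lemma uni_take: "uni xs \<Longrightarrow> take i xs \<in> units_list (length (take i xs))"
  unfolding uni_def units_list_def using in_set_takeD[of _ i xs] by blast

lemma uni_drop: "uni xs \<Longrightarrow> drop i xs \<in> units_list (length (drop i xs))"
  unfolding uni_def units_list_def using in_set_dropD[of _ i xs] by blast

lemma R_mult:
  assumes "i < length xs" "uni xs" "a \<noteq> 0" "b \<noteq> 0"
  shows "symb (xs[i:=a*b]) - symb (xs[i:=a]) - symb (xs[i:=b]) \<in> RR C (length xs)"
proof -
  have e: "xs[i:=v] = take i xs @ [v] @ drop (Suc i) xs" for v
    using assms(1) by (simp add: upd_conv_take_nth_drop)
  have "symb (take i xs @ [a*b] @ drop (Suc i) xs) - symb (take i xs @ [a] @ drop (Suc i) xs)
        - symb (take i xs @ [b] @ drop (Suc i) xs) \<in> milnor_rel (length xs)"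
    unfolding milnor_rel_def
    apply (rule UnI1)
    apply (rule CollectI)
    apply (rule exI[of _ "take i xs"], rule exI[of _ "drop (Suc i) xs"], rule exI[of _ a], rule exI[of _ b])
    using assms uni_take[OF assms(2), of i] uni_drop[OF assms(2), of "Suc i"] by (auto simp: min_def)
  then show ?thesis unfolding RR_def e by (auto intro: zgen_gen)
qed

lemma R_stein:
  assumes "Suc i < length xs" "uni xs" "xs ! i + xs ! Suc i = 1"
  shows "symb xs \<in> RR C (length xs)"
proof -
  let ?a = "xs ! i"
  have a0: "?a \<noteq> 0" and a1: "?a \<noteq> 1"
  proof -
    show "?a \<noteq> 0" using uni_nth[OF assms(2), of i] assms(1) by simp
    show "?a \<noteq> 1"
    proof
      assume "?a = 1"
      then have "xs ! Suc i = 0" using assms(3) by simp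
      then show False using uni_nth[OF assms(2) assms(1)] by simp
    qed
  qed
  have e: "xs = take i xs @ [?a, 1 - ?a] @ drop (Suc (Suc i)) xs"
    using assms(1,3)
    by (metis Cons_nth_drop_Suc Suc_lessD add_diff_cancel_left' append_Cons append_self_conv2 append_take_drop_id)
  have "symb (take i xs @ [?a, 1 - ?a] @ drop (Suc (Suc i)) xs) \<in> milnor_rel (length xs)"
    unfolding milnor_rel_def
    apply (rule UnI2)
    apply (rule CollectI)
    apply (rule exI[of _ "take i xs"], rule exI[of _ "drop (Suc (Suc i)) xs"], rule exI[of _ ?a])
    using assms a0 a1 uni_take[OF assms(2), of i] uni_drop[OF assms(2), of "Suc (Suc i)"] by (auto simp: min_def)
  then have "symb xs \<in> milnor_rel (length xs)" by (simp only: e[symmetric])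
  then show ?thesis unfolding RR_def by (intro zgen_gen UnI1)
qed

lemma R_const0:
  assumes "0 < length xs" "uni xs" "xs ! 0 \<in> C"
  shows "symb xs \<in> RR C (length xs)"
proof -
  have e: "xs = xs ! 0 # drop 1 xs" using assms(1)
    by (metis Cons_nth_drop_Suc One_nat_def drop0)
  have "symb (xs ! 0 # drop 1 xs) \<in> const_syms C (length xs)"
    unfolding const_syms_def
    apply (rule CollectI)
    apply (rule exI[of _ "xs ! 0"], rule exI[of _ "drop 1 xs"])
    using assms uni_nth[OF assms(2) assms(1)] uni_drop[OF assms(2), of 1] by (auto simp: units_list_def)
  then have "symb xs \<in> const_syms C (length xs)" by (simp only: e[symmetric])
  then show ?thesis unfolding RR_def by (intro zgen_gen UnI2)
qed


lemma R_add: "x \<in> RR C n \<Longrightarrow> y \<in> RR C n \<Longrightarrow> x + y \<in> RR C n"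
  unfolding RR_def by (rule zgen_add)
lemma R_diff: "x \<in> RR C n \<Longrightarrow> y \<in> RR C n \<Longrightarrow> x - y \<in> RR C n"
  unfolding RR_def by (rule zgen_diff)
lemma R_uminus: "x \<in> RR C n \<Longrightarrow> - x \<in> RR C n"
  unfolding RR_def by (rule zgen_uminus)
lemma R_uminus_iff: "- x \<in> RR C n \<longleftrightarrow> x \<in> RR C n"
  using R_uminus[of x C n] R_uminus[of "-x" C n] by auto

lemma R_one:
  assumes "i < length xs" "uni xs" "xs ! i = 1"
  shows "symb xs \<in> RR C (length xs)"
proof -
  have "symb (xs[i:=1*1]) - symb (xs[i:=1]) - symb (xs[i:=1]) \<in> RR C (length xs)"
    by (rule R_mult) (use assms in auto)
  moreover have "xs[i:=1] = xs" using assms(3) list_update_id[of xs i] by simp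
  ultimately have "- symb xs \<in> RR C (length xs)" by simp
  then show ?thesis by (simp add: R_uminus_iff)
qed

lemma R_neg_adj:
  assumes "Suc i < length xs" "uni xs" "xs ! i + xs ! Suc i = 0"
  shows "symb xs \<in> RR C (length xs)"
proof (cases "xs ! i = 1")
  case True
  then show ?thesis using R_one[of i xs] assms by simp
next
  case False
  define x where "x = xs ! i"
  have x0: "x \<noteq> 0" using uni_nth[OF assms(2), of i] assms(1) x_def by simp
  have "xs ! Suc i = (xs ! i + xs ! Suc i) - xs ! i" by simp
  then have xi: "xs ! Suc i = - x" using assms(3) x_def by simp
  have x1: "x \<noteq> 1" using False x_def by simp
  have b0: "1 - 1/x \<noteq> 0" using x1 x0 by (simp add: field_simps)
  have e1: "(- x) * (1 - 1/x) = 1 - x" using x0 by (simp add: field_simps)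
  have h1: "symb (xs[Suc i:=(- x) * (1 - 1/x)]) - symb (xs[Suc i:= - x]) - symb (xs[Suc i:=1 - 1/x]) \<in> RR C (length xs)"
    by (rule R_mult) (use assms x0 b0 in auto)
  have h2: "symb (xs[Suc i:=1 - x]) \<in> RR C (length xs)"
    using R_stein[of i "xs[Suc i:=1 - x]" C] assms x1 x_def by (simp add: uni_upd)
  define ys where "ys = xs[Suc i:=1 - 1/x]"
  have ly: "length ys = length xs" by (simp add: ys_def)
  have uy: "uni ys" unfolding ys_def using assms(2) b0 by (rule uni_upd)
  have h3: "symb (ys[i:=x * (1/x)]) - symb (ys[i:=x]) - symb (ys[i:=1/x]) \<in> RR C (length xs)"
    using R_mult[of i ys x "1/x" C] assms uy x0 ly by simp
  have h4: "symb (ys[i:=x * (1/x)]) \<in> RR C (length xs)"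
    using R_one[of i "ys[i:=x * (1/x)]" C] assms uy x0 ly by (simp add: uni_upd)
  have h5: "symb (ys[i:=1/x]) \<in> RR C (length xs)"
    using R_stein[of i "ys[i:=1/x]" C] assms uy x0 ly by (simp add: uni_upd ys_def)
  have "ys ! i = x" using assms x_def ys_def by simp
  then have "ys[i:=x] = ys" using list_update_id[of ys i] by simp
  then have h6: "symb ys \<in> RR C (length xs)"
    using R_diff[OF R_diff[OF h4 h3] h5] by simp
  have "xs[Suc i:= - x] = xs" using xi list_update_id[of xs "Suc i"] by simp
  then have "symb xs = symb (xs[Suc i:=1 - x]) - (symb (xs[Suc i:=(- x) * (1 - 1/x)]) - symb (xs[Suc i:= - x]) - symb (xs[Suc i:=1 - 1/x])) - symb ys"
    using e1 ys_def by simp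
  then show ?thesis using R_diff[OF R_diff[OF h2 h1] h6] by simp
qed

lemma R_swap_adj:
  assumes "Suc i < length xs" "uni xs"
  shows "symb xs + symb (xs[i := xs ! Suc i, Suc i := xs ! i]) \<in> RR C (length xs)"
proof -
  define a where "a = xs ! i"
  define b where "b = xs ! Suc i"
  define S where "S p q = symb (xs[i:=p, Suc i:=q])" for p q
  have a0: "a \<noteq> 0" using uni_nth[OF assms(2), of i] assms(1) a_def by simp
  have b0: "b \<noteq> 0" using uni_nth[OF assms(2), of "Suc i"] assms(1) b_def by simp
  have sw: "xs[i:=p, Suc i:=q] = xs[Suc i:=q, i:=p]" for p q by (simp add: list_update_swap)
  have u: "uni (xs[i:=p, Suc i:=q])" if "p \<noteq> 0" "q \<noteq> 0" for p q
    using that assms(2) by (simp add: uni_upd)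
  have f1: "S (a*b) (-(a*b)) \<in> RR C (length xs)"
    unfolding S_def using R_neg_adj[of i "xs[i:=a*b, Suc i:=-(a*b)]" C] assms a0 b0 u by simp
  have f2: "S (a*b) (-(a*b)) - S a (-(a*b)) - S b (-(a*b)) \<in> RR C (length xs)"
    unfolding S_def sw using R_mult[of i "xs[Suc i:=-(a*b)]" a b C] assms a0 b0 by (simp add: uni_upd)
  have f3: "S a (-(a*b)) - S a (-a) - S a b \<in> RR C (length xs)"
    unfolding S_def using R_mult[of "Suc i" "xs[i:=a]" "-a" b C] assms a0 b0 by (simp add: uni_upd)
  have f4: "S b (-(a*b)) - S b a - S b (-b) \<in> RR C (length xs)"
    unfolding S_def using R_mult[of "Suc i" "xs[i:=b]" a "-b" C] assms a0 b0 by (simp add: uni_upd)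
  have f5: "S a (-a) \<in> RR C (length xs)"
    unfolding S_def using R_neg_adj[of i "xs[i:=a, Suc i:=-a]" C] assms a0 u by simp
  have f6: "S b (-b) \<in> RR C (length xs)"
    unfolding S_def using R_neg_adj[of i "xs[i:=b, Suc i:=-b]" C] assms b0 u by simp
  have e: "symb xs + symb (xs[i := xs ! Suc i, Suc i := xs ! i]) = S a b + S b a"
    unfolding S_def a_def b_def by simp
  have "S a b + S b a = (S (a*b) (-(a*b)) - (S (a*b) (-(a*b)) - S a (-(a*b)) - S b (-(a*b))))
     - (S a (-(a*b)) - S a (-a) - S a b) - (S b (-(a*b)) - S b a - S b (-b)) - S a (-a) - S b (-b)"
    by (simp add: algebra_simps)
  then show ?thesis unfolding e
    using R_diff[OF R_diff[OF R_diff[OF R_diff[OF R_diff[OF f1 f2] f3] f4] f5] f6] by simp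
qed

lemma R_move:
  assumes Qsym: "\<And>u v. Q u v \<Longrightarrow> Q v u"
    and adj: "\<And>ys k. Suc k < length ys \<Longrightarrow> uni ys \<Longrightarrow> length ys = n \<Longrightarrow> Q (ys ! k) (ys ! Suc k)
               \<Longrightarrow> symb ys \<in> RR C n"
  shows "i < j \<Longrightarrow> j < length xs \<Longrightarrow> length xs = n \<Longrightarrow> uni xs \<Longrightarrow> Q (xs ! i) (xs ! j)
          \<Longrightarrow> symb xs \<in> RR C n"
proof (induction "j - i" arbitrary: xs j)
  case 0
  then show ?case by simp
next
  case (Suc d)
  show ?case
  proof (cases "j = Suc i")
    case True
    then show ?thesis using adj[of i xs] Suc.prems by simp
  next
    case False
    define j' where "j' = j - 1"
    have j': "j = Suc j'" "i < j'" using Suc.prems(1) False by (auto simp: j'_def)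
    define ys where "ys = xs[j' := xs ! j, j := xs ! j']"
    have ly: "length ys = length xs" by (simp add: ys_def)
    have nz1: "xs ! j \<noteq> 0" using uni_nth[OF Suc.prems(4) Suc.prems(2)] .
    have nz2: "xs ! j' \<noteq> 0" using uni_nth[OF Suc.prems(4)] Suc.prems(2) j' by simp
    have uy: "uni ys" unfolding ys_def using Suc.prems(4) nz1 nz2 by (intro uni_upd)
    have yi: "ys ! i = xs ! i" using j' Suc.prems by (simp add: ys_def)
    have yj: "ys ! j' = xs ! j" using j' Suc.prems by (simp add: ys_def)
    have dd: "d = j' - i" using Suc.hyps(2) j' by simp
    have "symb ys \<in> RR C n"
      using Suc.hyps(1)[OF dd] j' Suc.prems(2,3,5) ly uy yi yj by simp
    moreover have "symb xs + symb ys \<in> RR C n"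
      using R_swap_adj[of j' xs C] Suc.prems j' by (simp add: ys_def)
    ultimately have "(symb xs + symb ys) - symb ys \<in> RR C n" using R_diff by blast
    then show ?thesis by simp
  qed
qed

lemma R_move2:
  assumes Qsym: "\<And>u v. Q u v \<Longrightarrow> Q v u"
    and adj: "\<And>ys k. Suc k < length ys \<Longrightarrow> uni ys \<Longrightarrow> length ys = n \<Longrightarrow> Q (ys ! k) (ys ! Suc k)
               \<Longrightarrow> symb ys \<in> RR C n"
    and "i \<noteq> j" "i < length xs" "j < length xs" "length xs = n" "uni xs" "Q (xs ! i) (xs ! j)"
  shows "symb xs \<in> RR C n"
proof (cases "i < j")
  case True
  then show ?thesis using R_move[of Q n C i j xs] assms by blast
next
  case False
  then have "j < i" using assms(3) by simp
  then show ?thesis using R_move[of Q n C j i xs] assms by blast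
qed

lemma R_const:
  assumes "i < length xs" "uni xs" "xs ! i \<in> C"
  shows "symb xs \<in> RR C (length xs)"
  using assms
proof (induction i arbitrary: xs)
  case 0
  then show ?case using R_const0 by blast
next
  case (Suc i)
  define ys where "ys = xs[i := xs ! Suc i, Suc i := xs ! i]"
  have ly: "length ys = length xs" by (simp add: ys_def)
  have uy: "uni ys" unfolding ys_def using Suc.prems uni_nth[OF Suc.prems(2)]
    by (intro uni_upd) auto
  have "ys ! i = xs ! Suc i" using Suc.prems by (simp add: ys_def nth_list_update)
  then have "symb ys \<in> RR C (length xs)" using Suc.IH[of ys] Suc.prems ly uy by simp
  moreover have "symb xs + symb ys \<in> RR C (length xs)"
    using R_swap_adj[of i xs C] Suc.prems by (simp add: ys_def)
  ultimately have "(symb xs + symb ys) - symb ys \<in> RR C (length xs)" using R_diff by blast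
  then show ?case by simp
qed

lemma R_stein_gen:
  assumes "i \<noteq> j" "i < length xs" "j < length xs" "uni xs" "xs ! i + xs ! j = 1"
  shows "symb xs \<in> RR C (length xs)"
  apply (rule R_move2[of "\<lambda>u v. u + v = 1" "length xs" C i j xs])
  subgoal by (simp add: add.commute)
  subgoal for ys k by (metis R_stein)
  using assms by auto

lemma R_neg_gen:
  assumes "i \<noteq> j" "i < length xs" "j < length xs" "uni xs" "xs ! i + xs ! j = 0"
  shows "symb xs \<in> RR C (length xs)"
  apply (rule R_move2[of "\<lambda>u v. u + v = 0" "length xs" C i j xs])
  subgoal by (simp add: add.commute)
  subgoal for ys k by (metis R_neg_adj)
  using assms by auto

lemma R_eq_gen:
  assumes "i \<noteq> j" "i < length xs" "j < length xs" "uni xs" "xs ! i = xs ! j" "-1 \<in> C"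
  shows "symb xs \<in> RR C (length xs)"
proof -
  define x where "x = xs ! j"
  have x0: "x \<noteq> 0" using uni_nth[OF assms(4) assms(3)] x_def by simp
  have h1: "symb (xs[j:=(-x)*(-1)]) - symb (xs[j:=-x]) - symb (xs[j:=-1]) \<in> RR C (length xs)"
    by (rule R_mult) (use assms x0 in auto)
  have h2: "symb (xs[j:=-x]) \<in> RR C (length xs)"
    using R_neg_gen[of i j "xs[j:=-x]" C] assms x0 x_def by (simp add: uni_upd)
  have h3: "symb (xs[j:=-1]) \<in> RR C (length xs)"
    using R_const[of j "xs[j:=-1]" C] assms by (simp add: uni_upd)
  have "xs[j:=(-x)*(-1)] = xs" using x_def by simp
  then show ?thesis using R_add[OF R_add[OF h1 h2] h3] by simp
qed


definition dv :: "nat set \<Rightarrow> 'k::field list \<Rightarrow> 'k \<Rightarrow> 'k list" where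
  "dv P xs w = map (\<lambda>i. if i \<in> P then xs ! i / w else xs ! i) [0..<length xs]"

lemma dv_length[simp]: "length (dv P xs w) = length xs"
  by (simp add: dv_def)

lemma dv_nth: "i < length xs \<Longrightarrow> dv P xs w ! i = (if i \<in> P then xs ! i / w else xs ! i)"
  by (simp add: dv_def)

lemma dv_uni: "uni xs \<Longrightarrow> w \<noteq> 0 \<Longrightarrow> uni (dv P xs w)"
  unfolding uni_def dv_def by (auto simp: in_set_conv_nth)

lemma dv_insert: "i < length xs \<Longrightarrow> dv (insert i P) xs w = (dv P xs w)[i := xs ! i / w]"
  by (rule nth_equalityI) (auto simp: dv_nth nth_list_update)

lemma R_div:
  assumes "finite P"
  shows "P \<subseteq> {..<length xs} - {j} \<Longrightarrow> j < length xs \<Longrightarrow> uni xs \<Longrightarrow> w \<noteq> 0 \<Longrightarrow>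
    (\<And>zs i. length zs = length xs \<Longrightarrow> uni zs \<Longrightarrow> zs ! j = xs ! j \<Longrightarrow> i < length xs \<Longrightarrow> i \<noteq> j
       \<Longrightarrow> zs ! i = w \<Longrightarrow> symb zs \<in> RR C (length xs)) \<Longrightarrow>
    symb xs - symb (dv P xs w) \<in> RR C (length xs)"
  using assms
proof (induction P rule: finite_induct)
  case empty
  have "dv {} xs w = xs" by (rule nth_equalityI) (auto simp: dv_nth)
  then show ?case using zgen_zero[of "milnor_rel (length xs) \<union> const_syms C (length xs)"]
    by (simp add: RR_def)
next
  case (insert i P)
  have i: "i < length xs" "i \<noteq> j" using insert.prems(1) by auto
  define A where "A = dv P xs w"
  define B where "B = dv (insert i P) xs w"
  have B: "B = A[i := xs ! i / w]" unfolding A_def B_def using i(1) by (rule dv_insert)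
  have IH: "symb xs - symb A \<in> RR C (length xs)" unfolding A_def
    using insert.IH insert.prems by blast
  have uA: "uni A" unfolding A_def by (rule dv_uni) (use insert.prems in auto)
  have uB: "uni B" unfolding B_def by (rule dv_uni) (use insert.prems in auto)
  have lA: "length A = length xs" "length B = length xs" by (simp_all add: A_def B_def)
  have xi: "xs ! i / w \<noteq> 0" using uni_nth[OF insert.prems(3) i(1)] insert.prems(4) by simp
  have h1: "symb (B[i := (xs ! i / w) * w]) - symb (B[i := xs ! i / w]) - symb (B[i := w]) \<in> RR C (length xs)"
    using R_mult[of i B "xs ! i / w" w C] i uB lA xi insert.prems(4) by simp
  have Ai: "A ! i = xs ! i" unfolding A_def using i insert.hyps(2) by (simp add: dv_nth)
  have "(xs ! i / w) * w = xs ! i" using insert.prems(4) by simp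
  then have e1: "B[i := (xs ! i / w) * w] = A" unfolding B using Ai list_update_id[of A i]
    by simp
  have e2: "B[i := xs ! i / w] = B" unfolding B by simp
  have jP: "j \<notin> insert i P" using insert.prems(1) i by auto
  have Bj: "B ! j = xs ! j" unfolding B_def using insert.prems(2) jP by (simp add: dv_nth)
  have h2: "symb (B[i := w]) \<in> RR C (length xs)"
    apply (rule insert.prems(5)[of _ i])
    using lA uB insert.prems(4) i Bj by (auto simp: uni_upd)
  have h1': "symb A - symb B - symb (B[i := w]) \<in> RR C (length xs)" using h1 unfolding e1 e2 .
  have "symb xs - symb B = (symb xs - symb A) + (symb A - symb B - symb (B[i := w])) + symb (B[i := w])"
    by simp
  then show ?case using R_add[OF R_add[OF IH h1'] h2] by (simp add: B_def)
qed


lemma sum_single_support: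
  fixes f :: "nat \<Rightarrow> 'k::field"
  assumes "j < n" "\<And>i. i < n \<Longrightarrow> i \<noteq> j \<Longrightarrow> f i = 0"
  shows "(\<Sum>i<n. f i) = f j"
proof -
  have "(\<Sum>i<n. f i) = (\<Sum>i<n. if i = j then f j else 0)"
    by (rule sum.cong) (use assms in auto)
  also have "\<dots> = f j" using assms(1) by simp
  finally show ?thesis .
qed

lemma dep_kill:
  fixes gs :: "'k::field list"
  assumes Cm: "\<And>x y. x \<in> C \<Longrightarrow> y \<in> C \<Longrightarrow> x * y \<in> C"
    and Ci: "\<And>x. x \<in> C \<Longrightarrow> inverse x \<in> C"
    and Cn: "\<And>x. x \<in> C \<Longrightarrow> - x \<in> C"
    and C1: "1 \<in> C" and C0: "0 \<in> C"
  shows "uni gs \<Longrightarrow> \<mu>0 \<in> C \<Longrightarrow> (\<forall>i<length gs. \<mu> i \<in> C) \<Longrightarrow>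
         \<mu>0 + (\<Sum>i<length gs. \<mu> i * gs ! i) = 0 \<Longrightarrow> (\<exists>i<length gs. \<mu> i \<noteq> 0) \<Longrightarrow>
         symb gs \<in> RR C (length gs)"
proof (induction "card {i. i < length gs \<and> \<mu> i \<noteq> 0}" arbitrary: gs \<mu>0 \<mu> rule: less_induct)
  case less
  define n where "n = length gs"
  define S where "S = {i. i < n \<and> \<mu> i \<noteq> 0}"
  have finS: "finite S" unfolding S_def by simp
  obtain j where j: "j < n" "\<mu> j \<noteq> 0" using less.prems(5) n_def by blast
  have jS: "j \<in> S" using j S_def by simp
  have gj0: "gs ! j \<noteq> 0" using uni_nth[OF less.prems(1)] j n_def by simp
  have Cdiv: "x \<in> C \<Longrightarrow> y \<in> C \<Longrightarrow> x / y \<in> C" for x y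
    using Cm Ci by (simp add: divide_inverse)
  have Cm1: "-1 \<in> C" using Cn C1 by simp
  have mC: "\<mu> i \<in> C" if "i < n" for i using less.prems(3) that n_def by simp
  define \<mu>' where "\<mu>' = \<mu>(j := 0)"
  have cardlt: "card {i. i < length gs \<and> \<mu>' i \<noteq> 0} < card {i. i < length gs \<and> \<mu> i \<noteq> 0}"
  proof -
    have "{i. i < length gs \<and> \<mu>' i \<noteq> 0} = S - {j}" unfolding S_def \<mu>'_def n_def by auto
    moreover have "card S > 0" using finS jS card_gt_0_iff by auto
    ultimately show ?thesis using finS jS by (simp add: S_def n_def)
  qed
  have m'C: "\<forall>i<length gs. \<mu>' i \<in> C" using mC C0 n_def by (simp add: \<mu>'_def)
  show ?case
  proof (cases "\<exists>k<n. k \<noteq> j \<and> \<mu> k \<noteq> 0")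
    case False
    then have "(\<Sum>i<n. \<mu> i * gs ! i) = \<mu> j * gs ! j"
      by (intro sum_single_support j(1)) auto
    then have e: "\<mu>0 + \<mu> j * gs ! j = 0" using less.prems(4) n_def by simp
    then have "gs ! j = - \<mu>0 / \<mu> j" using j(2) by (simp add: field_simps add_eq_0_iff)
    moreover have "- \<mu>0 / \<mu> j \<in> C" using Cdiv Cn less.prems(2) mC[OF j(1)] by simp
    ultimately show ?thesis using R_const[of j gs C] less.prems(1) j n_def by simp
  next
    case True
    then obtain k where k: "k < n" "k \<noteq> j" "\<mu> k \<noteq> 0" by blast
    have ex': "\<exists>i<length gs. \<mu>' i \<noteq> 0" using k n_def by (auto simp: \<mu>'_def)
    define P where "P = {..<n} - {j}"
    have finP: "finite P" "P \<subseteq> {..<length gs} - {j}" by (auto simp: P_def n_def)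
    show ?thesis
    proof (cases "\<mu>0 = 0")
      case True
      define hs where "hs = dv P gs (gs ! j)"
      have d: "symb gs - symb hs \<in> RR C (length gs)" unfolding hs_def
        apply (rule R_div[OF finP(1) finP(2)])
        using j n_def less.prems(1) gj0 apply auto[3]
        subgoal for zs i using R_eq_gen[of i j zs C] Cm1 j n_def by auto
        done
      have uh: "uni hs" unfolding hs_def using less.prems(1) gj0 by (rule dv_uni)
      have lh: "length hs = length gs" by (simp add: hs_def)
      have trm: "\<mu>' i * hs ! i = (\<mu> i * gs ! i) / gs ! j - (if i = j then \<mu> j else 0)" if "i < n" for i
        using that gj0 by (auto simp: hs_def dv_nth P_def \<mu>'_def n_def)
      have "(\<Sum>i<n. \<mu>' i * hs ! i) = (\<Sum>i<n. (\<mu> i * gs ! i) / gs ! j) - (\<Sum>i<n. if i = j then \<mu> j else 0)"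
        using trm by (simp add: sum_subtractf)
      also have "\<dots> = (\<Sum>i<n. \<mu> i * gs ! i) / gs ! j - \<mu> j"
        using j(1) by (simp add: sum_divide_distrib)
      also have "\<dots> = - \<mu> j" using less.prems(4) True n_def by simp
      finally have rel: "\<mu> j + (\<Sum>i<length hs. \<mu>' i * hs ! i) = 0" using lh n_def by simp
      have "symb hs \<in> RR C (length hs)"
        using less.hyps[OF _ uh mC[OF j(1)] _ rel] cardlt lh m'C ex' by simp
      then show ?thesis using R_diff[OF d[folded lh]] lh by (metis R_add diff_add_cancel)
    next
      case False
      define u where "u = - \<mu> j * gs ! j / \<mu>0"
      define w where "w = 1 - u"
      have wexp: "\<mu>0 * w = \<mu>0 + \<mu> j * gs ! j" using False by (simp add: w_def u_def field_simps)
      have fullsum: "(\<Sum>i<n. \<mu> i * gs ! i) = - \<mu>0" using less.prems(4) n_def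
        by (simp add: eq_neg_iff_add_eq_0 add.commute)
      have sum': "(\<Sum>i<n. \<mu>' i * gs ! i) = (\<Sum>i<n. \<mu> i * gs ! i) - \<mu> j * gs ! j"
      proof -
        have "(\<Sum>i<n. \<mu>' i * gs ! i) = (\<Sum>i<n. \<mu> i * gs ! i - (if i = j then \<mu> j * gs ! j else 0))"
          by (rule sum.cong) (auto simp: \<mu>'_def)
        also have "\<dots> = (\<Sum>i<n. \<mu> i * gs ! i) - \<mu> j * gs ! j" using j(1) by (simp add: sum_subtractf)
        finally show ?thesis .
      qed
      show ?thesis
      proof (cases "w = 0")
        case True
        then have "\<mu>0 + \<mu> j * gs ! j = 0" using wexp by simp
        moreover have "(\<Sum>i<n. \<mu>' i * gs ! i) = - (\<mu>0 + \<mu> j * gs ! j)" using sum' fullsum by simp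
        ultimately have rel: "0 + (\<Sum>i<length gs. \<mu>' i * gs ! i) = 0" using n_def by simp
        show ?thesis using less.hyps[OF cardlt less.prems(1) C0 m'C rel ex'] .
      next
        case wnz: False
        have u0: "u \<noteq> 0" using False j(2) gj0 by (simp add: u_def)
        have u1: "u \<noteq> 1" using wnz by (simp add: w_def)
        define c where "c = - \<mu>0 / \<mu> j"
        have cC: "c \<in> C" using Cdiv Cn less.prems(2) mC[OF j(1)] by (simp add: c_def)
        have c0: "c \<noteq> 0" using False j(2) by (simp add: c_def)
        have gju: "c * u = gs ! j" using False j(2) by (simp add: c_def u_def field_simps)
        define gs1 where "gs1 = gs[j := u]"
        have ug1: "uni gs1" unfolding gs1_def using less.prems(1) u0 by (rule uni_upd)
        have lg1: "length gs1 = length gs" by (simp add: gs1_def)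
        have m1: "symb (gs[j := c * u]) - symb (gs[j := c]) - symb (gs[j := u]) \<in> RR C (length gs)"
          using R_mult[of j gs c u C] j n_def less.prems(1) c0 u0 by simp
        have m2: "symb (gs[j := c]) \<in> RR C (length gs)"
          using R_const[of j "gs[j := c]" C] j n_def less.prems(1) c0 cC by (simp add: uni_upd)
        have "gs[j := c * u] = gs" using gju list_update_id[of gs j] by simp
        then have d1: "symb gs - symb gs1 \<in> RR C (length gs)"
          using R_add[OF m1 m2] by (simp add: gs1_def)
        define hs where "hs = dv P gs1 w"
        have g1j: "gs1 ! j = u" using j n_def by (simp add: gs1_def)
        have d2: "symb gs1 - symb hs \<in> RR C (length gs)" unfolding hs_def
          apply (rule R_div[of P gs1 j w C, unfolded lg1])
          using finP j n_def ug1 wnz lg1 apply auto[5]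
          subgoal for zs i using R_stein_gen[of j i zs C] j n_def g1j by (simp add: w_def)
          done
        have uh: "uni hs" unfolding hs_def using ug1 wnz by (rule dv_uni)
        have lh: "length hs = length gs" by (simp add: hs_def lg1)
        have trm: "\<mu>' i * hs ! i = (\<mu>' i * gs ! i) / w" if "i < n" for i
          using that by (auto simp: hs_def dv_nth P_def \<mu>'_def n_def lg1 gs1_def)
        have "(\<Sum>i<n. \<mu>' i * hs ! i) = (\<Sum>i<n. \<mu>' i * gs ! i) / w"
          using trm by (simp add: sum_divide_distrib)
        also have "\<dots> = (- \<mu>0 - \<mu> j * gs ! j) / w" using sum' fullsum by simp
        also have "\<dots> = - \<mu>0" using wexp wnz
          by (simp add: field_simps)
        finally have rel: "\<mu>0 + (\<Sum>i<length hs. \<mu>' i * hs ! i) = 0" using lh n_def by simp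
        have "symb hs \<in> RR C (length hs)"
          using less.hyps[OF _ uh less.prems(2) _ rel] cardlt lh m'C ex' by simp
        then have "symb hs \<in> RR C (length gs)" using lh by simp
        then have "(symb gs - symb gs1) + (symb gs1 - symb hs) + symb hs \<in> RR C (length gs)"
          using R_add[OF R_add[OF d1 d2]] by blast
        then show ?thesis by simp
      qed
    qed
  qed
qed


definition tf :: "'b::idom \<Rightarrow> 'b fract" where "tf p = Fract p 1"

lemma tf_add: "tf (p + q) = tf p + tf q" by (simp add: tf_def)
lemma tf_mult: "tf (p * q) = tf p * tf q" by (simp add: tf_def)
lemma tf_0: "tf 0 = 0" by (simp add: tf_def fract_collapse)
lemma tf_1: "tf 1 = 1" by (simp add: tf_def fract_collapse)
lemma tf_sum: "tf (sum f A) = sum (\<lambda>x. tf (f x)) A"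
  by (induction A rule: infinite_finite_induct) (auto simp: tf_0 tf_add)
lemma tf_eq_iff: "tf p = tf q \<longleftrightarrow> p = q" by (simp add: tf_def eq_fract)
lemma Fract_tf: "q \<noteq> 0 \<Longrightarrow> Fract p q = tf p / tf q"
  by (simp add: tf_def divide_fract_def)

lemma const_fun_tf: "const_fun c = tf (Poly_Mapping.single 0 c)"
  by (simp add: const_fun_def tf_def)

lemma single0_mult: "Poly_Mapping.single 0 x * Poly_Mapping.single 0 y = (Poly_Mapping.single 0 (x * y) :: ('v \<Rightarrow>\<^sub>0 nat) \<Rightarrow>\<^sub>0 'a::field)"
  by (simp add: mult_single)

lemma single_nz: "v \<noteq> 0 \<Longrightarrow> Poly_Mapping.single k v \<noteq> 0"
  by (metis lookup_single_eq lookup_zero)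

lemma single_inj: "Poly_Mapping.single k (1::nat) = Poly_Mapping.single k' 1 \<longleftrightarrow> k = k'"
  by (metis lookup_single_eq lookup_single_not_eq one_neq_zero)

lemma single_Suc0_nz[simp]: "Poly_Mapping.single v (Suc 0) \<noteq> 0" "0 \<noteq> Poly_Mapping.single v (Suc 0)"
  by (metis lookup_single_eq lookup_zero nat.distinct(1))+

lemma single_Suc0_inj[simp]: "Poly_Mapping.single v (Suc 0) = Poly_Mapping.single w (Suc 0) \<longleftrightarrow> v = w"
  by (metis lookup_single_eq lookup_single_not_eq nat.distinct(1))

lemma const_fun_mult: "const_fun x * const_fun y = (const_fun (x * y) :: ('v::{finite,linorder}, 'a::field) mpoly fract)"
  by (simp add: const_fun_def mult_single)
lemma const_fun_0: "const_fun 0 = 0" by (simp add: const_fun_def fract_collapse)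
lemma const_fun_1: "const_fun 1 = 1" by (simp add: const_fun_def fract_collapse)
lemma const_fun_uminus: "- const_fun x = const_fun (- x)" by (simp add: const_fun_def single_uminus)
lemma fract_inv_single: "x \<noteq> 0 \<Longrightarrow> Fract (1::('v::linorder \<Rightarrow>\<^sub>0 nat) \<Rightarrow>\<^sub>0 'a::field) (Poly_Mapping.single 0 x) = Fract (Poly_Mapping.single 0 (inverse x)) 1"
  apply (subst eq_fract(1))
  using single_nz[of x 0] by (auto simp: mult_single)

lemma const_fun_inverse: "inverse (const_fun x) = (const_fun (inverse x) :: ('v::{finite,linorder}, 'a::field) mpoly fract)"
proof (cases "x = 0")
  case True then show ?thesis by (simp add: const_fun_0)
next
  case False
  then show ?thesis using fract_inv_single[of x] by (simp add: const_fun_def)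
qed
lemma const_fun_nz: "x \<noteq> 0 \<Longrightarrow> (const_fun x :: ('v::{finite,linorder}, 'a::field) mpoly fract) \<noteq> 0"
  using single_nz[of x 0] by (simp add: const_fun_def eq_fract Zero_fract_def)

context fixes a b :: "'v::{finite,linorder} option \<Rightarrow> 'a::field" begin
lemma lin_form_add: "lin_form a + lin_form b = lin_form (\<lambda>j. a j + b j)"
  by (simp add: lin_form_def single_add sum.distrib algebra_simps)

lemma lin_form_smult: "Poly_Mapping.single 0 x * lin_form a = lin_form (\<lambda>j. x * a j)"
  by (simp add: lin_form_def mult_single distrib_left sum_distrib_left)

end
lemma lin_form_zero: "lin_form (\<lambda>j. 0) = 0"
  by (simp add: lin_form_def)

lemma lin_form_sum: fixes a :: "nat \<Rightarrow> 'v::{finite,linorder} option \<Rightarrow> 'a::field" shows "(\<Sum>i\<in>I. Poly_Mapping.single 0 (l i) * lin_form (a i)) = lin_form (\<lambda>j. \<Sum>i\<in>I. l i * a i j)"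
proof (induction I rule: infinite_finite_induct)
  case (infinite A) then show ?case by (simp add: lin_form_zero)
next
  case empty then show ?case by (simp add: lin_form_zero)
next
  case (insert x F) then show ?case by (simp add: lin_form_smult lin_form_add)
qed

lemma lookup_lin_form_0: "Poly_Mapping.lookup (lin_form (a :: 'v::{finite,linorder} option \<Rightarrow> 'a::field)) 0 = a None"
  by (simp add: lin_form_def lookup_add lookup_sum lookup_single when_def)

lemma lookup_lin_form_var: "Poly_Mapping.lookup (lin_form (a :: 'v::{finite,linorder} option \<Rightarrow> 'a::field)) (Poly_Mapping.single v 1) = a (Some v)"
  by (simp add: lin_form_def lookup_add lookup_sum lookup_single when_def)

lemma lin_form_nz: "\<exists>j. a j \<noteq> 0 \<Longrightarrow> lin_form (a :: 'v::{finite,linorder} option \<Rightarrow> 'a::field) \<noteq> 0"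
proof
  assume "\<exists>j. a j \<noteq> 0" "lin_form a = 0"
  then obtain j where j: "a j \<noteq> 0" by blast
  show False
  proof (cases j)
    case None then show False using j lookup_lin_form_0[of a] \<open>lin_form a = 0\<close> by simp
  next
    case (Some v) then show False using j lookup_lin_form_var[of a v] \<open>lin_form a = 0\<close> by simp
  qed
qed


lemma Fract_nz: "p \<noteq> 0 \<Longrightarrow> q \<noteq> 0 \<Longrightarrow> Fract p q \<noteq> 0"
  by (simp add: Zero_fract_def eq_fract)

lemma dep_dir:
  fixes a :: "nat \<Rightarrow> 'v::{finite,linorder} option \<Rightarrow> 'a::field"
    and c :: "nat \<Rightarrow> 'a"
    and n :: nat
  assumes hyp: "\<And>i. i \<le> n \<Longrightarrow> \<exists>j. a i j \<noteq> 0"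
    and cnz: "\<And>i. 1 \<le> i \<Longrightarrow> i \<le> n \<Longrightarrow> c i \<noteq> 0"
    and dep: "\<not> lin_indep_vecs n a"
  shows "\<not> nonzero_class_mod_const (range (const_fun :: 'a \<Rightarrow> ('v, 'a) mpoly fract))
           (map (\<lambda>i. const_fun (c i) * Fract (lin_form (a i)) (lin_form (a 0))) [1..<n+1])"
proof -
  define L where "L i = lin_form (a i)" for i
  define g where "g i = (const_fun (c i) * Fract (L i) (L 0) :: ('v, 'a) mpoly fract)" for i
  define gs where "gs = map g [1..<n+1]"
  define C where "C = range (const_fun :: 'a \<Rightarrow> ('v, 'a) mpoly fract)"
  have lg: "length gs = n" by (simp add: gs_def)
  have gsi: "gs ! i = g (Suc i)" if "i < n" for i using that by (simp add: gs_def del: upt_Suc)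
  have Lnz: "L i \<noteq> 0" if "i \<le> n" for i unfolding L_def using hyp[OF that] by (rule lin_form_nz)
  have gnz: "g i \<noteq> 0" if "1 \<le> i" "i \<le> n" for i
    unfolding g_def using const_fun_nz[OF cnz[OF that]] Fract_nz[OF Lnz[OF that(2)] Lnz[of 0]] by simp
  have ug: "uni gs" unfolding uni_def
  proof
    fix x assume "x \<in> set gs"
    then obtain i where i: "i < n" "x = gs ! i" by (metis in_set_conv_nth lg)
    then show "x \<noteq> 0" using gsi[OF i(1)] gnz[of "Suc i"] by simp
  qed
  from dep obtain l i0 where l: "\<And>j. (\<Sum>i\<le>n. l i * a i j) = 0" and i0: "i0 \<le> n" "l i0 \<noteq> 0"
    unfolding lin_indep_vecs_def by blast
  define \<mu> :: "nat \<Rightarrow> ('v, 'a) mpoly fract" where "\<mu> i = const_fun (l (Suc i) / c (Suc i))" for i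
  have Cm: "x \<in> C \<Longrightarrow> y \<in> C \<Longrightarrow> x * y \<in> C" for x y
    unfolding C_def by (auto simp: const_fun_mult)
  have Ci: "x \<in> C \<Longrightarrow> inverse x \<in> C" for x
    unfolding C_def by (auto simp: const_fun_inverse)
  have Cn: "x \<in> C \<Longrightarrow> - x \<in> C" for x
    unfolding C_def by (auto simp: const_fun_uminus)
  have C1: "1 \<in> C" unfolding C_def using const_fun_1 by (metis rangeI)
  have C0: "0 \<in> C" unfolding C_def using const_fun_0 by (metis rangeI)
  have muC: "\<forall>i<length gs. \<mu> i \<in> C" by (simp add: C_def \<mu>_def)
  have m0C: "const_fun (l 0) \<in> C" by (simp add: C_def)
  have term1: "\<mu> i * gs ! i = tf (Poly_Mapping.single 0 (l (Suc i)) * L (Suc i)) / tf (L 0)" if "i < n" for i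
  proof -
    have "\<mu> i * gs ! i = const_fun (l (Suc i) / c (Suc i)) * const_fun (c (Suc i)) * Fract (L (Suc i)) (L 0)"
      using that by (simp add: gsi g_def \<mu>_def mult.assoc)
    also have "\<dots> = const_fun (l (Suc i)) * Fract (L (Suc i)) (L 0)"
      using cnz[of "Suc i"] that by (simp add: const_fun_mult)
    finally show ?thesis using Lnz[of 0]
      by (simp add: Fract_tf const_fun_tf tf_mult)
  qed
  have t0: "const_fun (l 0) = tf (Poly_Mapping.single 0 (l 0) * L 0) / tf (L 0)"
    using Lnz[of 0] by (simp add: const_fun_tf tf_mult tf_eq_iff tf_0[symmetric])
  have "const_fun (l 0) + (\<Sum>i<length gs. \<mu> i * gs ! i)
      = tf (Poly_Mapping.single 0 (l 0) * L 0) / tf (L 0) + (\<Sum>i<n. tf (Poly_Mapping.single 0 (l (Suc i)) * L (Suc i)) / tf (L 0))"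
    using term1 t0 lg by simp
  also have "\<dots> = tf (\<Sum>i\<le>n. Poly_Mapping.single 0 (l i) * L i) / tf (L 0)"
    by (simp add: sum.atMost_shift[of _ n] tf_sum tf_add add_divide_distrib sum_divide_distrib)
  also have "(\<Sum>i\<le>n. Poly_Mapping.single 0 (l i) * L i) = 0"
    unfolding L_def lin_form_sum l by (rule lin_form_zero)
  finally have rel: "const_fun (l 0) + (\<Sum>i<length gs. \<mu> i * gs ! i) = 0" by (simp add: tf_0)
  have nt: "\<exists>i<length gs. \<mu> i \<noteq> 0"
  proof (rule ccontr)
    assume "\<not> ?thesis"
    then have z: "l (Suc i) = 0" if "i < n" for i
      using that cnz[of "Suc i"] const_fun_nz[of "l (Suc i) / c (Suc i)"] lg by (auto simp: \<mu>_def)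
    then have "i0 = 0" using i0 by (metis Suc_le_eq not0_implies_Suc)
    have "a 0 j = 0" for j
    proof -
      have "(\<Sum>i\<le>n. l i * a i j) = l 0 * a 0 j"
        by (simp add: sum.atMost_shift[of _ n] z)
      then show ?thesis using l[of j] i0 \<open>i0 = 0\<close> by simp
    qed
    then show False using hyp[of 0] by simp
  qed
  have "symb gs \<in> RR C (length gs)"
    by (rule dep_kill[OF Cm Ci Cn C1 C0 ug m0C muC rel nt])
  then show ?thesis unfolding nonzero_class_mod_const_def RR_def C_def gs_def g_def L_def by simp
qed


abbreviation lk where "lk \<equiv> Poly_Mapping.lookup"
abbreviation ks where "ks \<equiv> Poly_Mapping.keys"


type_synonym ('w, 'a) pm = "('w \<Rightarrow>\<^sub>0 nat) \<Rightarrow>\<^sub>0 'a"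

abbreviation sc :: "'a::comm_ring_1 \<Rightarrow> ('w, 'a) pm" where "sc c \<equiv> Poly_Mapping.single 0 c"

definition mon :: "('w \<Rightarrow> ('u, 'a::comm_ring_1) pm) \<Rightarrow> ('w \<Rightarrow>\<^sub>0 nat) \<Rightarrow> ('u, 'a) pm" where
  "mon r m = (\<Prod>w\<in>ks m. r w ^ lk m w)"

definition ev :: "('w \<Rightarrow> ('u, 'a::comm_ring_1) pm) \<Rightarrow> ('w, 'a) pm \<Rightarrow> ('u, 'a) pm" where
  "ev r p = (\<Sum>m\<in>ks p. Poly_Mapping.single 0 (lk p m) * mon r m)"

lemma mon_superset: "finite S \<Longrightarrow> ks m \<subseteq> S \<Longrightarrow> mon r m = (\<Prod>w\<in>S. r w ^ lk m w)"
  unfolding mon_def by (rule prod.mono_neutral_left) (auto simp: in_keys_iff)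

lemma mon_add: "mon r (m1 + m2) = mon r m1 * mon r m2"
proof -
  let ?S = "ks m1 \<union> ks m2"
  have "mon r (m1 + m2) = (\<Prod>w\<in>?S. r w ^ lk (m1 + m2) w)"
    by (rule mon_superset) (auto simp: keys_add)
  also have "\<dots> = (\<Prod>w\<in>?S. r w ^ lk m1 w) * (\<Prod>w\<in>?S. r w ^ lk m2 w)"
    by (simp add: lookup_add power_add prod.distrib)
  also have "\<dots> = mon r m1 * mon r m2"
    using mon_superset[of "ks m1 \<union> ks m2" m1 r] mon_superset[of "ks m1 \<union> ks m2" m2 r] by simp
  finally show ?thesis .
qed

lemma mon_zero[simp]: "mon r 0 = 1" by (simp add: mon_def)

lemma mon_var: "mon r (Poly_Mapping.single w 1) = r w"
  unfolding mon_def by simp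

lemma ev_superset: "finite S \<Longrightarrow> ks p \<subseteq> S \<Longrightarrow>
   ev r p = (\<Sum>m\<in>S. Poly_Mapping.single 0 (lk p m) * mon r m)"
  unfolding ev_def by (rule sum.mono_neutral_left) (auto simp: in_keys_iff)

lemma ev_add: "ev r (p + q) = ev r p + ev r q"
proof -
  let ?S = "ks p \<union> ks q"
  have "ev r (p + q) = (\<Sum>m\<in>?S. Poly_Mapping.single 0 (lk (p + q) m) * mon r m)"
    by (rule ev_superset) (auto simp: keys_add)
  also have "\<dots> = (\<Sum>m\<in>?S. Poly_Mapping.single 0 (lk p m) * mon r m)
       + (\<Sum>m\<in>?S. Poly_Mapping.single 0 (lk q m) * mon r m)"
    by (simp add: lookup_add single_add distrib_right sum.distrib)
  also have "\<dots> = ev r p + ev r q"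
    using ev_superset[of "ks p \<union> ks q" p r] ev_superset[of "ks p \<union> ks q" q r] by simp
  finally show ?thesis .
qed

lemma ev_zero[simp]: "ev r 0 = 0" by (simp add: ev_def)

lemma ev_uminus: "ev r (- p) = - ev r p"
  using ev_add[of r p "- p"] by (simp, metis add.commute eq_neg_iff_add_eq_0)

lemma ev_diff: "ev r (p - q) = ev r p - ev r q"
  using ev_add[of r p "- q"] ev_uminus[of r q] by simp

lemma ev_sum: "ev r (sum f A) = (\<Sum>x\<in>A. ev r (f x))"
  by (induction A rule: infinite_finite_induct) (auto simp: ev_add)

lemma ev_single: "ev r (Poly_Mapping.single m c) = Poly_Mapping.single 0 c * mon r m"
proof -
  have "ev r (Poly_Mapping.single m c) = (\<Sum>m'\<in>{m}. Poly_Mapping.single 0 (lk (Poly_Mapping.single m c) m') * mon r m')"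
    by (rule ev_superset) auto
  then show ?thesis by simp
qed

lemma ev_const: "ev r (Poly_Mapping.single 0 c) = Poly_Mapping.single 0 c"
  by (simp add: ev_single)

lemma ev_one: "ev r 1 = 1"
  using ev_const[of r 1] by simp

lemma ev_var: "ev r (Poly_Mapping.single (Poly_Mapping.single w 1) 1) = r w"
  unfolding ev_single mon_var by simp

lemma pm_expand: "p = (\<Sum>m\<in>ks p. Poly_Mapping.single m (lk p m))"
  by (rule poly_mapping_eqI) (simp add: lookup_sum lookup_single when_def in_keys_iff sum.delta' )

lemma ev_mult: "ev r (p * q) = ev r p * ev r q"
proof -
  have "p * q = (\<Sum>m\<in>ks p. Poly_Mapping.single m (lk p m)) * (\<Sum>m'\<in>ks q. Poly_Mapping.single m' (lk q m'))"
    using pm_expand[of p] pm_expand[of q] by simp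
  also have "\<dots> = (\<Sum>m\<in>ks p. \<Sum>m'\<in>ks q. Poly_Mapping.single (m + m') (lk p m * lk q m'))"
    by (simp add: sum_product mult_single)
  finally have pq: "ev r (p * q) = (\<Sum>m\<in>ks p. \<Sum>m'\<in>ks q. ev r (Poly_Mapping.single (m + m') (lk p m * lk q m')))"
    by (simp add: ev_sum)
  have "ev r p * ev r q = (\<Sum>m\<in>ks p. ev r (Poly_Mapping.single m (lk p m))) * (\<Sum>m'\<in>ks q. ev r (Poly_Mapping.single m' (lk q m')))"
    using arg_cong[OF pm_expand[of p], of "ev r"] arg_cong[OF pm_expand[of q], of "ev r"]
    by (simp only: ev_sum)
  also have "\<dots> = (\<Sum>m\<in>ks p. \<Sum>m'\<in>ks q. ev r (Poly_Mapping.single m (lk p m)) * ev r (Poly_Mapping.single m' (lk q m')))"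
    by (simp add: sum_product)
  also have "\<dots> = (\<Sum>m\<in>ks p. \<Sum>m'\<in>ks q. ev r (Poly_Mapping.single (m + m') (lk p m * lk q m')))"
    by (simp add: ev_single mon_add mult_single algebra_simps)
  finally show ?thesis using pq by simp
qed

lemma ev_pow: "ev r (p ^ k) = ev r p ^ k"
  by (induction k) (simp_all add: ev_one ev_mult)

lemma ev_prod: "ev r (prod f A) = (\<Prod>x\<in>A. ev r (f x))"
  by (induction A rule: infinite_finite_induct) (auto simp: ev_one ev_mult)

lemma ev_mono: "ev r' (mon r m) = mon (\<lambda>w. ev r' (r w)) m"
  by (simp add: mon_def ev_prod ev_pow)

lemma ev_comp: "ev r' (ev r p) = ev (\<lambda>w. ev r' (r w)) p"
proof -
  have e1: "ev r p = (\<Sum>m\<in>ks p. Poly_Mapping.single 0 (lk p m) * mon r m)" by (rule ev_def)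
  have e2: "ev (\<lambda>w. ev r' (r w)) p = (\<Sum>m\<in>ks p. Poly_Mapping.single 0 (lk p m) * mon (\<lambda>w. ev r' (r w)) m)"
    by (rule ev_def)
  show ?thesis unfolding e1 e2 ev_sum ev_mult ev_const ev_mono by (rule refl)
qed

lemma prod_single: "(\<Prod>w\<in>A. Poly_Mapping.single (f w) (1::'a::comm_ring_1)) = Poly_Mapping.single (\<Sum>w\<in>A. f w) 1"
  by (induction A rule: infinite_finite_induct) (simp_all add: mult_single)

definition X :: "'w \<Rightarrow> ('w, 'a::comm_ring_1) pm" where
  "X w = Poly_Mapping.single (Poly_Mapping.single w 1) 1"

lemma X_pow: "X w ^ k = (Poly_Mapping.single (Poly_Mapping.single w k) 1 :: ('w, 'a::comm_ring_1) pm)"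
  by (induction k) (simp_all add: X_def mult_single single_add[symmetric])

lemma pm_expand_nat: "(m::'w \<Rightarrow>\<^sub>0 nat) = (\<Sum>w\<in>ks m. Poly_Mapping.single w (lk m w))"
  by (rule poly_mapping_eqI) (simp add: lookup_sum lookup_single when_def in_keys_iff sum.delta')

lemma mon_X: "mon X m = (Poly_Mapping.single m 1 :: ('w, 'a::comm_ring_1) pm)"
proof -
  have "mon X m = (\<Prod>w\<in>ks m. Poly_Mapping.single (Poly_Mapping.single w (lk m w)) (1::'a))"
    by (simp add: mon_def X_pow)
  also have "\<dots> = Poly_Mapping.single (\<Sum>w\<in>ks m. Poly_Mapping.single w (lk m w)) 1"
    by (rule prod_single)
  also have "(\<Sum>w\<in>ks m. Poly_Mapping.single w (lk m w)) = m"
    using pm_expand_nat[of m] by simp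
  finally show ?thesis .
qed

lemma ev_X: "ev X p = p"
  unfolding ev_def mon_X by (simp add: mult_single pm_expand[symmetric])


lemma pm_zero_le: "(0 :: 'u::linorder \<Rightarrow>\<^sub>0 nat) \<le> m"
proof (rule ccontr)
  assume "\<not> 0 \<le> m"
  then have "m < 0" by simp
  then have "less_fun (lk m) (lk 0)" by (simp add: less_poly_mapping.rep_eq)
  then show False by (auto simp: less_fun_def)
qed

definition mk :: "('u::linorder, 'a::field) pm \<Rightarrow> ('u \<Rightarrow>\<^sub>0 nat)" where
  "mk p = Min (ks p)"

lemma mk_in: "p \<noteq> 0 \<Longrightarrow> mk p \<in> ks p"
  unfolding mk_def by (rule Min_in) auto

lemma mk_le: "m \<in> ks p \<Longrightarrow> mk p \<le> m"
  unfolding mk_def by (rule Min_le) auto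

lemma mk_eqI: "m \<in> ks p \<Longrightarrow> (\<And>m'. m' \<in> ks p \<Longrightarrow> m \<le> m') \<Longrightarrow> mk p = m"
  unfolding mk_def by (rule Min_eqI) auto

lemma mk_coeff: "p \<noteq> 0 \<Longrightarrow> lk p (mk p) \<noteq> 0"
  using mk_in in_keys_iff by blast

lemma lookup_mult_expand:
  "lk (p * q) k = (\<Sum>m\<in>ks p. \<Sum>m'\<in>ks q. (lk p m * lk q m' when m + m' = k))"
proof -
  have "p * q = (\<Sum>m\<in>ks p. Poly_Mapping.single m (lk p m)) * (\<Sum>m'\<in>ks q. Poly_Mapping.single m' (lk q m'))"
    using pm_expand[of p] pm_expand[of q] by simp
  also have "\<dots> = (\<Sum>m\<in>ks p. \<Sum>m'\<in>ks q. Poly_Mapping.single (m + m') (lk p m * lk q m'))"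
    by (simp add: sum_product mult_single)
  finally show ?thesis by (simp add: lookup_sum lookup_single)
qed

lemma mk_mult:
  fixes p q :: "('u::linorder, 'a::field) pm"
  assumes "p \<noteq> 0" "q \<noteq> 0"
  shows "mk (p * q) = mk p + mk q" "lk (p * q) (mk p + mk q) = lk p (mk p) * lk q (mk q)"
proof -
  have uniq: "m = mk p \<and> m' = mk q" if "m \<in> ks p" "m' \<in> ks q" "m + m' = mk p + mk q" for m m'
  proof (rule ccontr)
    assume nt: "\<not> ?thesis"
    have a: "mk p \<le> m" "mk q \<le> m'" using mk_le that by auto
    have "mk p + mk q < m + m'"
    proof (cases "m = mk p")
      case True
      then have "mk q < m'" using nt a(2) by auto
      then show ?thesis by (rule add_le_less_mono[OF a(1)])
    next
      case False
      then have "mk p < m" using a(1) by auto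
      then show ?thesis by (rule add_less_le_mono[OF _ a(2)])
    qed
    then show False using that by simp
  qed
  have iff: "(m + m' = mk p + mk q) = (m = mk p \<and> m' = mk q)" if "m \<in> ks p" "m' \<in> ks q" for m m'
    using uniq[OF that] by auto
  show c: "lk (p * q) (mk p + mk q) = lk p (mk p) * lk q (mk q)"
  proof -
    have "lk (p * q) (mk p + mk q) = (\<Sum>m\<in>ks p. \<Sum>m'\<in>ks q. (lk p m * lk q m' when m + m' = mk p + mk q))"
      by (rule lookup_mult_expand)
    also have "\<dots> = (\<Sum>m\<in>ks p. \<Sum>m'\<in>ks q. (if m = mk p \<and> m' = mk q then lk p m * lk q m' else 0))"
      by (intro sum.cong refl) (simp add: when_def iff)
    also have "\<dots> = (\<Sum>m\<in>ks p. (if m = mk p then lk p m * lk q (mk q) else 0))"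
    proof (intro sum.cong refl)
      fix m
      show "(\<Sum>m'\<in>ks q. (if m = mk p \<and> m' = mk q then lk p m * lk q m' else 0)) = (if m = mk p then lk p m * lk q (mk q) else 0)"
        using mk_in[OF assms(2)] by (cases "m = mk p") (simp_all add: sum.delta')
    qed
    also have "\<dots> = lk p (mk p) * lk q (mk q)"
      using mk_in[OF assms(1)] by (simp add: sum.delta')
    finally show ?thesis .
  qed
  show "mk (p * q) = mk p + mk q"
  proof (rule mk_eqI)
    show "mk p + mk q \<in> ks (p * q)" using c mk_coeff[OF assms(1)] mk_coeff[OF assms(2)]
      by (simp add: in_keys_iff)
    fix m assume "m \<in> ks (p * q)"
    then obtain a b where "m = a + b" "a \<in> ks p" "b \<in> ks q" using keys_mult by blast
    then show "mk p + mk q \<le> m" using add_mono[OF mk_le[of a p] mk_le[of b q]] by simp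
  qed
qed

lemma mk_diff_less:
  fixes p q :: "('u::linorder, 'a::field) pm"
  assumes "p \<noteq> 0" "q \<noteq> 0" "mk p < mk q"
  shows "q - p \<noteq> 0" "mk (q - p) = mk p"
proof -
  have "lk q (mk p) = 0"
  proof (rule ccontr)
    assume "lk q (mk p) \<noteq> 0"
    then have "mk p \<in> ks q" by (simp add: in_keys_iff)
    then have "mk q \<le> mk p" by (rule mk_le)
    then show False using assms(3) by simp
  qed
  then have c: "lk (q - p) (mk p) = - lk p (mk p)" by (simp add: lookup_minus)
  then have k: "mk p \<in> ks (q - p)" using mk_coeff[OF assms(1)] by (simp add: in_keys_iff)
  then show "q - p \<noteq> 0" by auto
  show "mk (q - p) = mk p"
  proof (rule mk_eqI[OF k])
    fix m assume "m \<in> ks (q - p)"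
    then have "m \<in> ks q \<or> m \<in> ks p" using keys_diff[of q p] by blast
    then show "mk p \<le> m"
    proof
      assume "m \<in> ks q"
      then have "mk q \<le> m" by (rule mk_le)
      then show ?thesis using assms(3) by (meson less_imp_le order_trans)
    next
      assume "m \<in> ks p"
      then show ?thesis by (rule mk_le)
    qed
  qed
qed

lemma mk_const: "c \<noteq> 0 \<Longrightarrow> mk (Poly_Mapping.single 0 c :: ('u::linorder, 'a::field) pm) = 0"
  by (rule mk_eqI) (auto simp: pm_zero_le)

lemma mk_X: "mk (X r :: ('u::linorder, 'a::field) pm) = Poly_Mapping.single r 1"
  by (rule mk_eqI) (auto simp: X_def)

lemma mk_const_term: "lk p 0 \<noteq> 0 \<Longrightarrow> mk (p :: ('u::linorder, 'a::field) pm) = 0"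
  by (rule mk_eqI) (auto simp: pm_zero_le in_keys_iff)


definition opv :: "nat \<Rightarrow> 'v::{finite,linorder} option" where
  "opv t = (if t = 0 then None else Some (sorted_list_of_set (UNIV :: 'v set) ! (t - 1)))"

lemma opv_bij: "bij_betw (opv :: nat \<Rightarrow> 'v::{finite,linorder} option) {..<Suc (card (UNIV :: 'v set))} UNIV"
proof -
  let ?vs = "sorted_list_of_set (UNIV :: 'v set)"
  have d: "distinct ?vs" and l: "length ?vs = card (UNIV :: 'v set)" and s: "set ?vs = UNIV" by auto
  show ?thesis
  proof (rule bij_betwI')
    fix x y assume "x \<in> {..<Suc (card (UNIV :: 'v set))}" "y \<in> {..<Suc (card (UNIV :: 'v set))}"
    then show "(opv x = (opv y :: 'v option)) = (x = y)"
      using d l by (auto simp: opv_def nth_eq_iff_index_eq)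
  next
    fix x :: "nat" assume "x \<in> {..<Suc (card (UNIV :: 'v set))}" then show "(opv x :: 'v option) \<in> UNIV" by simp
  next
    fix y :: "'v option"
    show "\<exists>x\<in>{..<Suc (card (UNIV :: 'v set))}. y = opv x"
    proof (cases y)
      case None then show ?thesis by (intro bexI[of _ 0]) (auto simp: opv_def)
    next
      case (Some v)
      then obtain i where i: "i < length ?vs" "?vs ! i = v" using s by (metis in_set_conv_nth UNIV_I)
      show ?thesis using i l Some by (intro bexI[of _ "Suc i"]) (auto simp: opv_def)
    qed
  qed
qed

lemma opv_0: "opv 0 = None" by (simp add: opv_def)

lemma inverse_exists:
  fixes a :: "nat \<Rightarrow> 'v::{finite,linorder} option \<Rightarrow> 'a::field"
  assumes n_def: "n = card (UNIV :: 'v set)" and li: "lin_indep_vecs n a"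
  obtains B :: "nat \<Rightarrow> nat \<Rightarrow> 'a" where
    "\<And>i r. i \<le> n \<Longrightarrow> r \<le> n \<Longrightarrow> (\<Sum>t<Suc n. a i (opv t) * B t r) = (if i = r then 1 else 0)"
    "\<And>t t'. t \<le> n \<Longrightarrow> t' \<le> n \<Longrightarrow> (\<Sum>i<Suc n. B t i * a i (opv t')) = (if t = t' then 1 else 0)"
proof -
  define A :: "'a mat" where "A = mat (Suc n) (Suc n) (\<lambda>(i, t). a i (opv t))"
  have A: "A \<in> carrier_mat (Suc n) (Suc n)" by (simp add: A_def)
  have "det A \<noteq> 0"
  proof
    assume "det A = 0"
    then have "det (transpose_mat A) = 0" using det_transpose[OF A] by simp
    then obtain v where v: "v \<in> carrier_vec (Suc n)" "v \<noteq> 0\<^sub>v (Suc n)" "transpose_mat A *\<^sub>v v = 0\<^sub>v (Suc n)"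
      using det_0_iff_vec_prod_zero_field[of "transpose_mat A" "Suc n"] A by auto
    have eq: "(\<Sum>i\<le>n. v $ i * a i j) = 0" for j
    proof -
      obtain t where t: "t < Suc n" "j = opv t" using opv_bij[where 'v='v] n_def
        by (metis bij_betw_iff_bijections lessThan_iff UNIV_I)
      have "(transpose_mat A *\<^sub>v v) $ t = 0" using v(3) t by simp
      then have "(\<Sum>i<Suc n. A $$ (i, t) * v $ i) = 0"
        using t v(1) A by (simp add: scalar_prod_def row_transpose lessThan_atLeast0)
      then show ?thesis using t A_def
        by (simp add: lessThan_Suc_atMost mult.commute)
    qed
    have "\<forall>i\<le>n. v $ i = 0"
      using li unfolding lin_indep_vecs_def by (rule allE[of _ "\<lambda>i. v $ i"]) (use eq in blast)
    then have "v = 0\<^sub>v (Suc n)" using v(1) by (intro eq_vecI) auto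
    then show False using v(2) by simp
  qed
  from det_non_zero_imp_unit[OF A this, of "()"]
  obtain B where B: "B \<in> carrier_mat (Suc n) (Suc n)" "B * A = 1\<^sub>m (Suc n)" "A * B = 1\<^sub>m (Suc n)"
    unfolding Units_def ring_mat_def by auto
  show ?thesis
  proof (rule that[of "\<lambda>t r. B $$ (t, r)"])
    fix i r assume ir: "i \<le> n" "r \<le> n"
    have "(A * B) $$ (i, r) = (if i = r then 1 else 0)" using B(3) ir by simp
    then show "(\<Sum>t<Suc n. a i (opv t) * B $$ (t, r)) = (if i = r then 1 else 0)"
      using ir A B(1) by (simp add: scalar_prod_def A_def lessThan_atLeast0)
  next
    fix t t' assume tt: "t \<le> n" "t' \<le> n"
    have "(B * A) $$ (t, t') = (if t = t' then 1 else 0)" using B(2) tt by simp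
    then show "(\<Sum>i<Suc n. B $$ (t, i) * a i (opv t')) = (if t = t' then 1 else 0)"
      using tt A B(1) by (simp add: scalar_prod_def A_def lessThan_atLeast0)
  qed
qed



lemma sc_mult: "sc (x * y) = (sc x * sc y :: ('w, 'a::comm_ring_1) pm)" by (simp add: mult_single)
lemma sc_sum: "sc (sum f A) = (\<Sum>x\<in>A. sc (f x) :: ('w, 'a::comm_ring_1) pm)"
  by (induction A rule: infinite_finite_induct) (simp_all add: single_add)

lemma swap_sc:
  fixes Z :: "'r \<Rightarrow> ('w, 'a::comm_ring_1) pm"
  assumes "finite Js" "finite R"
  shows "(\<Sum>j\<in>Js. sc (f j) * (\<Sum>r\<in>R. sc (g j r) * Z r)) = (\<Sum>r\<in>R. sc (\<Sum>j\<in>Js. f j * g j r) * Z r)"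
proof -
  have "(\<Sum>j\<in>Js. sc (f j) * (\<Sum>r\<in>R. sc (g j r) * Z r)) = (\<Sum>j\<in>Js. \<Sum>r\<in>R. sc (f j * g j r) * Z r)"
    by (simp add: sum_distrib_left sc_mult mult.assoc)
  also have "\<dots> = (\<Sum>r\<in>R. \<Sum>j\<in>Js. sc (f j * g j r) * Z r)" by (rule sum.swap)
  also have "\<dots> = (\<Sum>r\<in>R. sc (\<Sum>j\<in>Js. f j * g j r) * Z r)"
    by (simp add: sc_sum sum_distrib_right)
  finally show ?thesis .
qed

lemma ev_Xvar: "ev r (X w) = r w"
  unfolding X_def by (rule ev_var)

lemma sum_delta_mult: "finite A \<Longrightarrow> i \<in> A \<Longrightarrow> (\<Sum>r\<in>A. (if i = r then 1 else 0) * (f r :: 'b::comm_ring_1)) = f i"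
proof -
  assume "finite A" "i \<in> A"
  have "(\<Sum>r\<in>A. (if i = r then 1 else 0) * f r) = (\<Sum>r\<in>A. if i = r then f r else 0)"
    by (rule sum.cong) auto
  then show ?thesis using \<open>finite A\<close> \<open>i \<in> A\<close> by simp
qed

lemma sum_delta_sc: "finite A \<Longrightarrow> i \<in> A \<Longrightarrow> (\<Sum>r\<in>A. sc (if i = r then 1 else 0) * (f r :: ('w, 'a::comm_ring_1) pm)) = f i"
proof -
  assume "finite A" "i \<in> A"
  have "(\<Sum>r\<in>A. sc (if i = r then 1 else 0) * f r) = (\<Sum>r\<in>A. if i = r then f r else 0)"
    by (rule sum.cong) auto
  then show ?thesis using \<open>finite A\<close> \<open>i \<in> A\<close> by simp
qed

definition Xo :: "'v option \<Rightarrow> ('v, 'a::comm_ring_1) pm" where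
  "Xo j = (case j of None \<Rightarrow> 1 | Some v \<Rightarrow> X v)"

lemma lin_form_Xo: "lin_form (a :: 'v::{finite,linorder} option \<Rightarrow> 'a::field) = (\<Sum>j\<in>UNIV. sc (a j) * Xo j)"
proof -
  have u: "(UNIV :: 'v option set) = insert None (Some ` UNIV)" by (auto intro: option.exhaust)
  have "(\<Sum>j\<in>UNIV. sc (a j) * Xo j) = sc (a None) + (\<Sum>j\<in>Some ` UNIV. sc (a j) * Xo j)"
    unfolding u by (subst sum.insert) (auto simp: Xo_def)
  also have "(\<Sum>j\<in>Some ` UNIV. sc (a j) * Xo j) = (\<Sum>v\<in>UNIV. sc (a (Some v)) * X v)"
    by (subst sum.reindex) (auto simp: Xo_def)
  finally show ?thesis by (simp add: lin_form_def X_def mult_single)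
qed

lemma sum_opv:
  assumes "n = card (UNIV :: 'v::{finite,linorder} set)"
  shows "(\<Sum>j\<in>(UNIV :: 'v option set). f j) = (\<Sum>t<Suc n. f (opv t))"
  using sum.reindex_bij_betw[OF opv_bij[where 'v='v], of f] assms by simp


definition mkv :: "('u::linorder, 'a::field) pm \<Rightarrow> 'u \<Rightarrow> int" where
  "mkv p = (\<lambda>r. int (lk (mk p) r))"

lemma mkv_mult: "p \<noteq> 0 \<Longrightarrow> q \<noteq> 0 \<Longrightarrow> mkv (p * q) = mkv p + mkv q"
  by (simp add: mkv_def mk_mult lookup_add fun_eq_iff)

lemma mk_uminus: "mk (- p) = mk (p :: ('u::linorder, 'a::field) pm)"
  by (simp add: mk_def)

lemma mkv_const: "c \<noteq> 0 \<Longrightarrow> mkv (sc c :: ('u::linorder, 'a::field) pm) = 0"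
proof -
  assume c: "c \<noteq> 0"
  have "mk (sc c :: ('u::linorder, 'a::field) pm) = 0" by (rule mk_const[OF c])
  then show ?thesis by (simp add: mkv_def fun_eq_iff)
qed

definition VV :: "(('v::{finite,linorder}, 'a::field) pm \<Rightarrow> (nat, 'a) pm) \<Rightarrow> ('v, 'a) pm fract \<Rightarrow> nat \<Rightarrow> int" where
  "VV \<phi> f = (SOME w. \<exists>p q. p \<noteq> 0 \<and> q \<noteq> 0 \<and> f = Fract p q \<and> w = mkv (\<phi> p) - mkv (\<phi> q))"

context
  fixes \<phi> :: "('v::{finite,linorder}, 'a::field) pm \<Rightarrow> (nat, 'a) pm"
  assumes \<phi>_mult: "\<And>p q. \<phi> (p * q) = \<phi> p * \<phi> q"
    and \<phi>_diff: "\<And>p q. \<phi> (p - q) = \<phi> p - \<phi> q"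
    and \<phi>_const: "\<And>c. \<phi> (sc c :: ('v, 'a) pm) = (sc c :: (nat, 'a) pm)"
    and \<phi>_inj: "\<And>p. \<phi> p = 0 \<Longrightarrow> p = 0"
begin

lemma \<phi>_nz: "p \<noteq> 0 \<Longrightarrow> \<phi> p \<noteq> 0" using \<phi>_inj by blast

lemma \<phi>_one: "\<phi> 1 = 1" using \<phi>_const[of 1] by simp

lemma VV_wd:
  assumes "p \<noteq> 0" "q \<noteq> 0" "p' \<noteq> 0" "q' \<noteq> 0" "Fract p q = Fract p' q'"
  shows "mkv (\<phi> p) - mkv (\<phi> q) = mkv (\<phi> p') - mkv (\<phi> q')"
proof -
  have "p * q' = p' * q" using assms by (simp add: eq_fract)
  then have "\<phi> p * \<phi> q' = \<phi> p' * \<phi> q" by (simp add: \<phi>_mult[symmetric])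
  moreover have "mkv (\<phi> p * \<phi> q') = mkv (\<phi> p) + mkv (\<phi> q')"
    by (rule mkv_mult) (use \<phi>_nz assms in auto)
  moreover have "mkv (\<phi> p' * \<phi> q) = mkv (\<phi> p') + mkv (\<phi> q)"
    by (rule mkv_mult) (use \<phi>_nz assms in auto)
  ultimately have "mkv (\<phi> p) + mkv (\<phi> q') = mkv (\<phi> p') + mkv (\<phi> q)" by simp
  then show ?thesis by (simp add: algebra_simps)
qed

lemma VV_Fract: "p \<noteq> 0 \<Longrightarrow> q \<noteq> 0 \<Longrightarrow> VV \<phi> (Fract p q) = mkv (\<phi> p) - mkv (\<phi> q)"
proof -
  assume pq: "p \<noteq> 0" "q \<noteq> 0"
  let ?P = "\<lambda>w. \<exists>p' q'. p' \<noteq> 0 \<and> q' \<noteq> 0 \<and> Fract p q = Fract p' q' \<and> w = mkv (\<phi> p') - mkv (\<phi> q')"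
  have "?P (mkv (\<phi> p) - mkv (\<phi> q))" using pq by blast
  from someI[of ?P, OF this] have "?P (SOME w. ?P w)" .
  then have "?P (VV \<phi> (Fract p q))" unfolding VV_def .
  then obtain p' q' where h: "p' \<noteq> 0" "q' \<noteq> 0" "Fract p q = Fract p' q'"
    "VV \<phi> (Fract p q) = mkv (\<phi> p') - mkv (\<phi> q')" by blast
  have "mkv (\<phi> p) - mkv (\<phi> q) = mkv (\<phi> p') - mkv (\<phi> q')" by (rule VV_wd[OF pq h(1,2,3)])
  then show ?thesis using h(4) by simp
qed

lemma fract_nz_cases:
  assumes "f \<noteq> 0"
  obtains p q where "p \<noteq> 0" "q \<noteq> 0" "f = Fract p q"
proof -
  obtain p q where "f = Fract p q" "q \<noteq> 0" by (cases f) auto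
  moreover have "p \<noteq> 0" using assms calculation by (auto simp: fract_collapse)
  ultimately show ?thesis using that by blast
qed

lemma VV_mult: "f \<noteq> 0 \<Longrightarrow> g \<noteq> 0 \<Longrightarrow> VV \<phi> (f * g) = VV \<phi> f + VV \<phi> g"
proof -
  assume "f \<noteq> 0" "g \<noteq> 0"
  then obtain p q p' q' where pq: "p \<noteq> 0" "q \<noteq> 0" "f = Fract p q" "p' \<noteq> 0" "q' \<noteq> 0" "g = Fract p' q'"
    by (metis fract_nz_cases)
  have "VV \<phi> (f * g) = VV \<phi> (Fract (p * p') (q * q'))" using pq by simp
  also have "\<dots> = mkv (\<phi> (p * p')) - mkv (\<phi> (q * q'))" using pq by (simp add: VV_Fract)
  also have "\<dots> = (mkv (\<phi> p) - mkv (\<phi> q)) + (mkv (\<phi> p') - mkv (\<phi> q'))"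
    using pq by (simp add: \<phi>_mult mkv_mult \<phi>_nz)
  also have "\<dots> = VV \<phi> f + VV \<phi> g" using pq by (simp add: VV_Fract)
  finally show ?thesis .
qed

lemma VV_const: "c \<noteq> 0 \<Longrightarrow> VV \<phi> (const_fun c) = 0"
proof -
  assume c: "c \<noteq> 0"
  have "VV \<phi> (const_fun c) = mkv (\<phi> (sc c)) - mkv (\<phi> 1)"
    unfolding const_fun_def using c single_nz[of c 0] VV_Fract[of "sc c" 1] by simp
  also have "\<dots> = 0" using c mkv_const[of 1] by (simp add: \<phi>_const \<phi>_one mkv_const)
  finally show ?thesis .
qed

lemma VV_stein:
  assumes "u \<noteq> 0" "u \<noteq> 1"
  shows "VV \<phi> u = 0 \<or> VV \<phi> (1 - u) = 0 \<or> VV \<phi> u = VV \<phi> (1 - u)"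
proof -
  obtain p q where pq: "p \<noteq> 0" "q \<noteq> 0" "u = Fract p q" using assms(1) by (metis fract_nz_cases)
  have e1: "1 - u = Fract (q - p) q" using pq by (simp add: One_fract_def algebra_simps)
  have qp: "q - p \<noteq> 0"
  proof
    assume "q - p = 0"
    then have "u = 1" using pq by (simp add: One_fract_def eq_fract)
    then show False using assms(2) by simp
  qed
  have V1: "VV \<phi> u = mkv (\<phi> p) - mkv (\<phi> q)" using pq by (simp add: VV_Fract)
  have V2: "VV \<phi> (1 - u) = mkv (\<phi> q - \<phi> p) - mkv (\<phi> q)" using pq qp e1 by (simp add: VV_Fract \<phi>_diff)
  have P: "\<phi> p \<noteq> 0" "\<phi> q \<noteq> 0" using pq \<phi>_nz by auto
  consider "mk (\<phi> p) = mk (\<phi> q)" | "mk (\<phi> p) < mk (\<phi> q)" | "mk (\<phi> q) < mk (\<phi> p)"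
    using less_linear by blast
  then show ?thesis
  proof cases
    case 1
    then have "VV \<phi> u = 0" using V1 by (simp add: mkv_def)
    then show ?thesis by simp
  next
    case 2
    then have "mk (\<phi> q - \<phi> p) = mk (\<phi> p)" using mk_diff_less[OF P 2] by simp
    then have "VV \<phi> u = VV \<phi> (1 - u)" using V1 V2 by (simp add: mkv_def)
    then show ?thesis by simp
  next
    case 3
    then have "mk (\<phi> p - \<phi> q) = mk (\<phi> q)" using mk_diff_less[OF P(2,1) 3] by simp
    moreover have "\<phi> q - \<phi> p = - (\<phi> p - \<phi> q)" by simp
    ultimately have "mk (\<phi> q - \<phi> p) = mk (\<phi> q)" by (simp only: mk_uminus)
    then have "VV \<phi> (1 - u) = 0" using V2 by (simp add: mkv_def)
    then show ?thesis by simp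
  qed
qed

end


lemma lookup_sc_mult: "lk (sc c * p) m = c * lk (p :: ('u::linorder, 'a::field) pm) m"
proof (cases "c = 0")
  case True then show ?thesis by simp
next
  case False
  have "lk (sc c * p) m = (\<Sum>m1\<in>{0}. \<Sum>m2\<in>ks p. (lk (sc c) m1 * lk p m2 when m1 + m2 = m))"
    using lookup_mult_expand[of "sc c" p m] False by simp
  also have "\<dots> = (\<Sum>m2\<in>ks p. (if m2 = m then c * lk p m2 else 0))"
    by (simp add: when_def)
  also have "\<dots> = c * lk p m" by (simp add: sum.delta' in_keys_iff)
  finally show ?thesis .
qed

lemma lk_X0: "lk (X r :: ('u::linorder, 'a::field) pm) 0 = 0"
  by (simp add: X_def lookup_single when_def)

lemma mkv_X: "mkv (X r :: ('u::linorder, 'a::field) pm) = (\<lambda>r'. if r' = r then 1 else 0)"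
  by (simp add: mkv_def mk_X lookup_single when_def fun_eq_iff)


context
  fixes a :: "nat \<Rightarrow> 'v::{finite,linorder} option \<Rightarrow> 'a::field" and n :: nat
    and B :: "nat \<Rightarrow> nat \<Rightarrow> 'a" and k :: nat
  assumes n_def: "n = card (UNIV::'v set)"
    and MB: "\<And>i r. i \<le> n \<Longrightarrow> r \<le> n \<Longrightarrow> (\<Sum>t<Suc n. a i (opv t) * B t r) = (if i = r then 1 else 0)"
    and BM: "\<And>t t'. t \<le> n \<Longrightarrow> t' \<le> n \<Longrightarrow> (\<Sum>i<Suc n. B t i * a i (opv t')) = (if t = t' then 1 else 0)"
    and kn: "k \<le> n" and Bk: "B 0 k \<noteq> 0"
begin

definition tix :: "'v option \<Rightarrow> nat" where "tix j = inv_into {..<Suc n} opv j"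

lemma tix: "tix j < Suc n" "opv (tix j) = j"
proof -
  have b: "bij_betw (opv :: nat \<Rightarrow> 'v option) {..<Suc n} UNIV" using opv_bij n_def by simp
  show "tix j < Suc n" "opv (tix j) = j" unfolding tix_def
    using bij_betw_inv_into_left[OF b] bij_betwE[OF bij_betw_inv_into[OF b]] b
    by (auto simp: bij_betw_def f_inv_into_f)
qed

lemma tix_opv: "t < Suc n \<Longrightarrow> tix (opv t) = t"
proof -
  assume t: "t < Suc n"
  have b: "bij_betw (opv :: nat \<Rightarrow> 'v option) {..<Suc n} UNIV" using opv_bij n_def by simp
  show ?thesis unfolding tix_def using bij_betw_inv_into_left[OF b] t by simp
qed

definition Yk :: "(nat, 'a) pm" where
  "Yk = sc (inverse (B 0 k)) * (1 - (\<Sum>r\<in>{..n} - {k}. sc (B 0 r) * X r))"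

definition Yv :: "nat \<Rightarrow> (nat, 'a) pm" where "Yv r = (if r = k then Yk else X r)"

definition rE' :: "'v \<Rightarrow> (nat, 'a) pm" where "rE' v = (\<Sum>r\<le>n. sc (B (tix (Some v)) r) * Yv r)"

definition rE :: "nat \<Rightarrow> ('v, 'a) pm" where "rE r = (if r \<le> n \<and> r \<noteq> k then lin_form (a r) else 0)"

lemma sum_remove_k: "(\<Sum>r\<le>n. f r) = f k + (\<Sum>r\<in>{..n} - {k}. f r)"
  using kn by (simp add: sum.remove)

lemma Yv_None: "(\<Sum>r\<le>n. sc (B 0 r) * Yv r) = 1"
proof -
  have "(\<Sum>r\<in>{..n} - {k}. sc (B 0 r) * Yv r) = (\<Sum>r\<in>{..n} - {k}. sc (B 0 r) * X r)"
    by (rule sum.cong) (auto simp: Yv_def)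
  moreover have "sc (B 0 k) * Yk = 1 - (\<Sum>r\<in>{..n} - {k}. sc (B 0 r) * X r)"
    unfolding Yk_def using Bk by (simp add: mult.assoc[symmetric] sc_mult[symmetric])
  ultimately show ?thesis by (simp add: sum_remove_k Yv_def)
qed

lemma E'_Xo: "ev rE' (Xo j) = (\<Sum>r\<le>n. sc (B (tix j) r) * Yv r)"
proof (cases j)
  case None
  have "tix None = 0" using tix_opv[of 0] by (simp add: opv_0)
  then show ?thesis using None Yv_None by (simp add: Xo_def ev_one)
next
  case (Some v)
  then show ?thesis by (simp add: Xo_def ev_Xvar rE'_def)
qed

lemma E'_lin: "i \<le> n \<Longrightarrow> ev rE' (lin_form (a i)) = Yv i"
proof -
  assume i: "i \<le> n"
  have "ev rE' (lin_form (a i)) = (\<Sum>j\<in>UNIV. sc (a i j) * ev rE' (Xo j))"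
    by (simp add: lin_form_Xo ev_sum ev_mult ev_const)
  also have "\<dots> = (\<Sum>j\<in>UNIV. sc (a i j) * (\<Sum>r\<le>n. sc (B (tix j) r) * Yv r))"
    by (simp add: E'_Xo)
  also have "\<dots> = (\<Sum>r\<le>n. sc (\<Sum>j\<in>UNIV. a i j * B (tix j) r) * Yv r)"
    by (rule swap_sc) auto
  also have "\<dots> = (\<Sum>r\<le>n. sc (if i = r then 1 else 0) * Yv r)"
  proof (rule sum.cong[OF refl])
    fix r assume r: "r \<in> {..n}"
    have "(\<Sum>j\<in>UNIV. a i j * B (tix j) r) = (\<Sum>t<Suc n. a i (opv t) * B (tix (opv t)) r)"
      by (rule sum_opv[OF n_def])
    also have "\<dots> = (\<Sum>t<Suc n. a i (opv t) * B t r)" by (rule sum.cong) (auto simp: tix_opv)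
    also have "\<dots> = (if i = r then 1 else 0)" using MB[OF i] r by simp
    finally show "sc (\<Sum>j\<in>UNIV. a i j * B (tix j) r) * Yv r = sc (if i = r then 1 else 0) * Yv r" by simp
  qed
  also have "\<dots> = Yv i" using i by (intro sum_delta_sc) auto
  finally show ?thesis .
qed

lemma S_t: "t \<le> n \<Longrightarrow> (\<Sum>r\<le>n. sc (B t r) * lin_form (a r)) = Xo (opv t)"
proof -
  assume t: "t \<le> n"
  have "(\<Sum>r\<le>n. sc (B t r) * lin_form (a r)) = (\<Sum>r\<le>n. sc (B t r) * (\<Sum>j\<in>UNIV. sc (a r j) * Xo j))"
    by (simp add: lin_form_Xo)
  also have "\<dots> = (\<Sum>j\<in>UNIV. sc (\<Sum>r\<le>n. B t r * a r j) * Xo j)"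
    by (rule swap_sc) auto
  also have "\<dots> = (\<Sum>t'<Suc n. sc (\<Sum>r\<le>n. B t r * a r (opv t')) * Xo (opv t'))"
    by (rule sum_opv[OF n_def])
  also have "\<dots> = (\<Sum>t'<Suc n. sc (if t = t' then 1 else 0) * Xo (opv t'))"
  proof (rule sum.cong[OF refl])
    fix t' assume t': "t' \<in> {..<Suc n}"
    have "(\<Sum>r\<le>n. B t r * a r (opv t')) = (\<Sum>r<Suc n. B t r * a r (opv t'))"
      by (simp add: lessThan_Suc_atMost)
    also have "\<dots> = (if t = t' then 1 else 0)" using BM[OF t] t' by simp
    finally show "sc (\<Sum>r\<le>n. B t r * a r (opv t')) * Xo (opv t') = sc (if t = t' then 1 else 0) * Xo (opv t')"
      by simp
  qed
  also have "\<dots> = Xo (opv t)" using t by (intro sum_delta_sc) auto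
  finally show ?thesis .
qed

lemma E_Yv: "r \<le> n \<Longrightarrow> ev rE (Yv r) = lin_form (a r)"
proof (cases "r = k")
  case False
  assume "r \<le> n"
  then show ?thesis using False by (simp add: Yv_def ev_Xvar rE_def)
next
  case True
  have s0: "(\<Sum>r\<le>n. sc (B 0 r) * lin_form (a r)) = 1" using S_t[of 0] by (simp add: opv_0 Xo_def)
  have "(\<Sum>r\<in>{..n} - {k}. sc (B 0 r) * ev rE (X r)) = (\<Sum>r\<in>{..n} - {k}. sc (B 0 r) * lin_form (a r))"
    by (rule sum.cong) (auto simp: ev_Xvar rE_def)
  also have "\<dots> = 1 - sc (B 0 k) * lin_form (a k)" using s0 sum_remove_k[of "\<lambda>r. sc (B 0 r) * lin_form (a r)"]
    by (simp add: algebra_simps)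
  finally have e: "(\<Sum>r\<in>{..n} - {k}. sc (B 0 r) * ev rE (X r)) = 1 - sc (B 0 k) * lin_form (a k)" .
  have "ev rE Yk = sc (inverse (B 0 k)) * (1 - (\<Sum>r\<in>{..n} - {k}. sc (B 0 r) * ev rE (X r)))"
    by (simp add: Yk_def ev_mult ev_const ev_diff ev_one ev_sum)
  also have "\<dots> = lin_form (a k)" unfolding e using Bk
    by (simp add: mult.assoc[symmetric] sc_mult[symmetric])
  finally show ?thesis using True by (simp add: Yv_def)
qed

lemma EE'_X: "ev rE (rE' v) = X v"
proof -
  have "ev rE (rE' v) = (\<Sum>r\<le>n. sc (B (tix (Some v)) r) * lin_form (a r))"
    unfolding rE'_def by (simp add: ev_sum ev_mult ev_const E_Yv)
  also have "\<dots> = Xo (opv (tix (Some v)))" using tix(1)[of "Some v"] by (intro S_t) simp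
  also have "\<dots> = X v" by (simp add: tix Xo_def)
  finally show ?thesis .
qed

lemma EE'_id: "ev rE (ev rE' p) = p"
proof -
  have "ev rE (ev rE' p) = ev (\<lambda>v. ev rE (rE' v)) p" by (rule ev_comp)
  also have "(\<lambda>v. ev rE (rE' v)) = X" by (rule ext) (rule EE'_X)
  finally show ?thesis by (simp add: ev_X)
qed

lemma E'_inj: "ev rE' p = 0 \<Longrightarrow> p = 0"
  using EE'_id[of p] by simp

lemma lk_Yk0: "lk Yk 0 \<noteq> 0"
proof -
  have "lk (\<Sum>r\<in>{..n} - {k}. sc (B 0 r) * X r) 0 = 0"
    by (simp add: lookup_sum lookup_sc_mult lk_X0)
  then have "lk (1 - (\<Sum>r\<in>{..n} - {k}. sc (B 0 r) * X r)) (0 :: nat \<Rightarrow>\<^sub>0 nat) = 1"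
    by (simp add: lookup_minus)
  then show ?thesis unfolding Yk_def using Bk by (simp add: lookup_sc_mult)
qed

lemma mkv_Yv: "mkv (Yv r) = (\<lambda>r'. if r \<noteq> k \<and> r' = r then 1 else 0)"
proof (cases "r = k")
  case True
  have "mk Yk = 0" by (rule mk_const_term[OF lk_Yk0])
  then show ?thesis using True by (simp add: Yv_def mkv_def fun_eq_iff)
next
  case False
  then show ?thesis by (simp add: Yv_def mkv_X fun_eq_iff)
qed

lemma phi_exists:
  "\<exists>\<phi> :: ('v, 'a) pm \<Rightarrow> (nat, 'a) pm.
     (\<forall>p q. \<phi> (p * q) = \<phi> p * \<phi> q) \<and> (\<forall>p q. \<phi> (p - q) = \<phi> p - \<phi> q) \<and>
     (\<forall>c. \<phi> (sc c) = sc c) \<and> (\<forall>p. \<phi> p = 0 \<longrightarrow> p = 0) \<and>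
     (\<forall>i\<le>n. mkv (\<phi> (lin_form (a i))) = (\<lambda>r'. if i \<noteq> k \<and> r' = i then 1 else 0))"
  by (rule exI[of _ "ev rE'"]) (auto simp: ev_mult ev_diff ev_const E'_inj E'_lin mkv_Yv)

end


context
  fixes W :: "'k::field \<Rightarrow> nat \<Rightarrow> int" and C :: "'k set" and n :: nat
  assumes W_mult: "\<And>x y. x \<noteq> 0 \<Longrightarrow> y \<noteq> 0 \<Longrightarrow> W (x * y) = W x + W y"
    and W_const: "\<And>c. c \<in> C \<Longrightarrow> c \<noteq> 0 \<Longrightarrow> W c = 0"
    and W_stein: "\<And>u. u \<noteq> 0 \<Longrightarrow> u \<noteq> 1 \<Longrightarrow> W u = 0 \<or> W (1 - u) = 0 \<or> W u = W (1 - u)"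
begin

definition rowv :: "'k \<Rightarrow> int vec" where "rowv x = vec n (W x)"

definition DD :: "'k list \<Rightarrow> int" where
  "DD xs = (if length xs = n then det (mat\<^sub>r n n (\<lambda>i. rowv (xs ! i))) else 0)"

definition PP :: "('k list \<Rightarrow>\<^sub>0 int) \<Rightarrow> int" where
  "PP c = (\<Sum>xs\<in>Poly_Mapping.keys c. Poly_Mapping.lookup c xs * DD xs)"

lemma PP_superset: "finite S \<Longrightarrow> Poly_Mapping.keys c \<subseteq> S \<Longrightarrow> PP c = (\<Sum>xs\<in>S. Poly_Mapping.lookup c xs * DD xs)"
  unfolding PP_def by (rule sum.mono_neutral_left) (auto simp: in_keys_iff)

lemma PP_diff: "PP (a - b) = PP a - PP b"
proof -
  let ?S = "Poly_Mapping.keys a \<union> Poly_Mapping.keys b"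
  have "PP (a - b) = (\<Sum>xs\<in>?S. Poly_Mapping.lookup (a - b) xs * DD xs)"
    by (rule PP_superset) (use keys_diff[of a b] in auto)
  also have "\<dots> = (\<Sum>xs\<in>?S. Poly_Mapping.lookup a xs * DD xs) - (\<Sum>xs\<in>?S. Poly_Mapping.lookup b xs * DD xs)"
    by (simp add: lookup_minus algebra_simps sum_subtractf)
  also have "\<dots> = PP a - PP b"
    using PP_superset[of ?S a] PP_superset[of ?S b] by simp
  finally show ?thesis .
qed

lemma PP_zero: "PP 0 = 0" by (simp add: PP_def)

lemma PP_symb: "PP (symb xs) = DD xs"
  by (simp add: PP_def symb_def)

lemma rowv_carrier: "rowv x \<in> carrier_vec n" by (simp add: rowv_def)

lemma rowv_mult: "x \<noteq> 0 \<Longrightarrow> y \<noteq> 0 \<Longrightarrow> rowv (x * y) = rowv x + rowv y"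
  by (rule eq_vecI) (simp_all add: rowv_def W_mult)

lemma rowv_zero: "W x = 0 \<Longrightarrow> rowv x = 0\<^sub>v n"
  by (rule eq_vecI) (simp_all add: rowv_def)

lemma mat_split:
  assumes "length xs + 1 + length ys = n"
  shows "mat\<^sub>r n n (\<lambda>i. rowv ((xs @ [v] @ ys) ! i)) =
         mat\<^sub>r n n (\<lambda>i. if i = length xs then rowv v else rowv ((xs @ [1] @ ys) ! i))"
  by (rule arg_cong[where f="mat\<^sub>r n n"]) (auto simp: nth_append fun_eq_iff)

lemma DD_mult:
  assumes "length xs + 1 + length ys = n" "a \<noteq> 0" "b \<noteq> 0"
  shows "DD (xs @ [a * b] @ ys) = DD (xs @ [a] @ ys) + DD (xs @ [b] @ ys)"
proof -
  have k: "length xs < n" using assms(1) by simp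
  have l: "length (xs @ [v] @ ys) = n" for v using assms(1) by simp
  let ?c = "\<lambda>i. rowv ((xs @ [1] @ ys) ! i)"
  have "det (mat\<^sub>r n n (\<lambda>i. if i = length xs then rowv a + rowv b else ?c i)) =
        det (mat\<^sub>r n n (\<lambda>i. if i = length xs then rowv a else ?c i)) +
        det (mat\<^sub>r n n (\<lambda>i. if i = length xs then rowv b else ?c i))"
    by (rule det_row_add) (auto simp: rowv_carrier k)
  then show ?thesis
    unfolding DD_def mat_split[OF assms(1)] rowv_mult[OF assms(2,3)] using l by simp
qed

lemma det_zero_row:
  assumes "k < n" "\<And>i. i < n \<Longrightarrow> f i \<in> carrier_vec n" "f k = 0\<^sub>v n"
  shows "det (mat\<^sub>r n n f) = 0"
proof -
  have "mat\<^sub>r n n f = mat\<^sub>r n n (\<lambda>i. if i = k then 0\<^sub>v n else f i)"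
    by (rule arg_cong[where f="mat\<^sub>r n n"]) (auto simp: fun_eq_iff assms(3))
  also have "det \<dots> = 0" by (rule det_row_0) (use assms in auto)
  finally show ?thesis .
qed

lemma DD_stein:
  assumes "length xs + 2 + length ys = n" "a \<noteq> 0" "a \<noteq> 1"
  shows "DD (xs @ [a, 1 - a] @ ys) = 0"
proof -
  define zs where "zs = xs @ [a, 1 - a] @ ys"
  define k where "k = length xs"
  have l: "length zs = n" using assms(1) by (simp add: zs_def)
  have z1: "zs ! k = a" and z2: "zs ! Suc k = 1 - a" by (simp_all add: nth_append zs_def k_def)
  have k: "k < n" "Suc k < n" using assms(1) by (auto simp: k_def)
  have car: "\<And>i. i < n \<Longrightarrow> rowv (zs ! i) \<in> carrier_vec n" by (simp add: rowv_carrier)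
  have "det (mat\<^sub>r n n (\<lambda>i. rowv (zs ! i))) = 0"
  proof -
    consider "W a = 0" | "W (1 - a) = 0" | "W a = W (1 - a)" using W_stein[OF assms(2,3)] by blast
    then show ?thesis
    proof cases
      case 1
      show ?thesis by (rule det_zero_row[OF k(1)]) (auto simp: rowv_carrier z1 rowv_zero[OF 1])
    next
      case 2
      show ?thesis by (rule det_zero_row[OF k(2)]) (auto simp: rowv_carrier z2 rowv_zero[OF 2])
    next
      case 3
      have r: "row (mat\<^sub>r n n (\<lambda>i. rowv (zs ! i))) i = rowv (zs ! i)" if "i < n" for i
        using that by (simp add: rowv_def)
      show ?thesis
        by (rule det_identical_rows[OF _ _ k(1) k(2)]) (auto simp: r k z1 z2 3 rowv_def)
    qed
  qed
  then show ?thesis using l by (simp add: DD_def zs_def)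
qed

lemma DD_const:
  assumes "c \<in> C" "c \<noteq> 0" "length ys = n - 1" "0 < n"
  shows "DD (c # ys) = 0"
proof -
  have l: "length (c # ys) = n" using assms by simp
  have "det (mat\<^sub>r n n (\<lambda>i. rowv ((c # ys) ! i))) = 0"
    by (rule det_zero_row[OF assms(4)]) (simp_all add: rowv_carrier rowv_zero W_const[OF assms(1,2)])
  then show ?thesis unfolding DD_def using l by simp
qed

lemma PP_kill: "x \<in> zgen (milnor_rel n \<union> const_syms C n) \<Longrightarrow> PP x = 0"
proof (induction rule: zgen.induct)
  case zgen_zero then show ?case by (rule PP_zero)
next
  case (zgen_diff x y) then show ?case by (simp add: PP_diff)
next
  case (zgen_gen x)
  then consider (m) "x \<in> milnor_rel n" | (c) "x \<in> const_syms C n" by blast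
  then show ?case
  proof cases
    case m
    then consider (mult) xs ys a b where "x = symb (xs @ [a * b] @ ys) - symb (xs @ [a] @ ys) - symb (xs @ [b] @ ys)"
        "length xs + 1 + length ys = n" "a \<noteq> 0" "b \<noteq> 0"
      | (st) xs ys a where "x = symb (xs @ [a, 1 - a] @ ys)" "length xs + 2 + length ys = n" "a \<noteq> 0" "a \<noteq> 1"
      unfolding milnor_rel_def by blast
    then show ?thesis
    proof cases
      case mult then show ?thesis using DD_mult[OF mult(2-4)] by (simp add: PP_diff PP_symb)
    next
      case st then show ?thesis using DD_stein[OF st(2-4)] by (simp add: PP_symb)
    qed
  next
    case c
    then obtain c ys where "x = symb (c # ys)" "c \<in> C" "c \<noteq> 0" "ys \<in> units_list (n - 1)"
      unfolding const_syms_def by blast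
    then show ?thesis
    proof (cases "n = 0")
      case True
      then have "DD (c # ys) = 0" unfolding DD_def by simp
      then show ?thesis using \<open>x = symb (c # ys)\<close> by (simp add: PP_symb)
    next
      case False
      then show ?thesis using \<open>x = symb (c # ys)\<close> \<open>c \<in> C\<close> \<open>c \<noteq> 0\<close> \<open>ys \<in> units_list (n - 1)\<close>
        by (simp add: PP_symb DD_const units_list_def)
    qed
  qed
qed

lemma nonzero_by_PP:
  assumes "length xs = n" "DD xs \<noteq> 0"
  shows "nonzero_class_mod_const C xs"
  unfolding nonzero_class_mod_const_def using PP_kill[of "symb xs"] PP_symb[of xs] assms by auto

end




lemma indep_dir:
  fixes a :: "nat \<Rightarrow> 'v::{finite,linorder} option \<Rightarrow> 'a::field"
    and c :: "nat \<Rightarrow> 'a"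
    and n :: nat
  assumes n_def: "n = card (UNIV :: 'v set)"
    and hyp: "\<And>i. i \<le> n \<Longrightarrow> \<exists>j. a i j \<noteq> 0"
    and cnz: "\<And>i. 1 \<le> i \<Longrightarrow> i \<le> n \<Longrightarrow> c i \<noteq> 0"
    and li: "lin_indep_vecs n a"
  shows "nonzero_class_mod_const (range (const_fun :: 'a \<Rightarrow> ('v, 'a) mpoly fract))
           (map (\<lambda>i. const_fun (c i) * Fract (lin_form (a i)) (lin_form (a 0))) [1..<n+1])"
proof -
  obtain B where MB: "\<And>i r. i \<le> n \<Longrightarrow> r \<le> n \<Longrightarrow> (\<Sum>t<Suc n. a i (opv t) * B t r) = (if i = r then 1 else 0)"
    and BM: "\<And>t t'. t \<le> n \<Longrightarrow> t' \<le> n \<Longrightarrow> (\<Sum>i<Suc n. B t i * a i (opv t')) = (if t = t' then 1 else 0)"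
    using inverse_exists[OF n_def li] by blast
  have "\<exists>k<Suc n. B 0 k \<noteq> 0"
  proof (rule ccontr)
    assume "\<not> ?thesis"
    then have "(\<Sum>i<Suc n. B 0 i * a i (opv 0)) = 0" by simp
    then show False using BM[of 0 0] by simp
  qed
  then obtain k where "k < Suc n" and Bk: "B 0 k \<noteq> 0" by blast
  then have kn: "k \<le> n" by simp
  obtain \<phi> :: "('v, 'a) pm \<Rightarrow> (nat, 'a) pm" where
    pm: "\<And>p q. \<phi> (p * q) = \<phi> p * \<phi> q" and pd: "\<And>p q. \<phi> (p - q) = \<phi> p - \<phi> q"
    and pc: "\<And>x. \<phi> (sc x) = sc x" and pinj: "\<And>p. \<phi> p = 0 \<Longrightarrow> p = 0"
    and pl: "\<And>i. i \<le> n \<Longrightarrow> mkv (\<phi> (lin_form (a i))) = (\<lambda>r'. if i \<noteq> k \<and> r' = i then 1 else 0)"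
    using phi_exists[OF n_def MB BM kn Bk] by blast
  have VV1: "VV \<phi> (f * g) = VV \<phi> f + VV \<phi> g" if "f \<noteq> 0" "g \<noteq> 0" for f g
    by (rule VV_mult[of \<phi>]) (use pm pd pc pinj that in auto)
  have VV2: "VV \<phi> (const_fun x) = 0" if "x \<noteq> 0" for x
    by (rule VV_const[of \<phi>]) (use pm pd pc pinj that in auto)
  have VV3: "VV \<phi> u = 0 \<or> VV \<phi> (1 - u) = 0 \<or> VV \<phi> u = VV \<phi> (1 - u)" if "u \<noteq> 0" "u \<noteq> 1" for u
    by (rule VV_stein[of \<phi>]) (use pm pd pc pinj that in auto)
  have VV4: "VV \<phi> (Fraction_Field.Fract p q) = mkv (\<phi> p) - mkv (\<phi> q)" if "p \<noteq> 0" "q \<noteq> 0" for p q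
    by (rule VV_Fract[of \<phi>]) (use pm pd pc pinj that in auto)
  note VVs = VV1 VV2 VV3 VV4
  define T :: "(nat \<Rightarrow> int) \<Rightarrow> nat \<Rightarrow> int" where
    "T v = (\<lambda>j. if Suc j = k then - (\<Sum>r\<le>n. v r) else v (Suc j))" for v
  define W where "W f = T (VV \<phi> f)" for f
  define C where "C = range (const_fun :: 'a \<Rightarrow> ('v, 'a) mpoly fract)"
  have T_add: "T (v + w) = T v + T w" for v w by (simp add: T_def fun_eq_iff sum.distrib)
  have T_0: "T 0 = 0" by (simp add: T_def fun_eq_iff)
  have W_mult: "x \<noteq> 0 \<Longrightarrow> y \<noteq> 0 \<Longrightarrow> W (x * y) = W x + W y" for x y
    by (simp add: W_def VVs T_add)
  have W_const: "x \<in> C \<Longrightarrow> x \<noteq> 0 \<Longrightarrow> W x = 0" for x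
  proof -
    assume "x \<in> C" "x \<noteq> 0"
    then obtain y where y: "x = const_fun y" "y \<noteq> 0" unfolding C_def using const_fun_0 by auto
    then show "W x = 0" by (simp add: W_def VVs T_0)
  qed
  have W_stein: "u \<noteq> 0 \<Longrightarrow> u \<noteq> 1 \<Longrightarrow> W u = 0 \<or> W (1 - u) = 0 \<or> W u = W (1 - u)" for u
    using VVs(3)[of u] T_0 unfolding W_def by auto
  define L where "L i = lin_form (a i)" for i
  define gs where "gs = map (\<lambda>i. const_fun (c i) * Fraction_Field.Fract (L i) (L 0)) [1..<n+1]"
  have lg: "length gs = n" by (simp add: gs_def)
  have gsi: "gs ! i = const_fun (c (Suc i)) * Fraction_Field.Fract (L (Suc i)) (L 0)" if "i < n" for i
    using that by (simp add: gs_def del: upt_Suc)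
  have Lnz: "L i \<noteq> 0" if "i \<le> n" for i unfolding L_def using hyp[OF that] by (rule lin_form_nz)
  define e :: "nat \<Rightarrow> nat \<Rightarrow> int" where "e s = (\<lambda>r'. if s \<noteq> k \<and> r' = s then 1 else 0)" for s
  have Ve: "VV \<phi> (gs ! i) = e (Suc i) - e 0" if "i < n" for i
  proof -
    have c0: "const_fun (c (Suc i)) \<noteq> (0 :: ('v, 'a) mpoly fract)" using cnz[of "Suc i"] that const_fun_nz by auto
    have f0: "Fraction_Field.Fract (L (Suc i)) (L 0) \<noteq> 0" using Lnz[of "Suc i"] Lnz[of 0] that Fract_nz by auto
    have "VV \<phi> (gs ! i) = VV \<phi> (const_fun (c (Suc i))) + VV \<phi> (Fraction_Field.Fract (L (Suc i)) (L 0))"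
      using gsi[OF that] VVs(1)[OF c0 f0] by simp
    also have "\<dots> = mkv (\<phi> (L (Suc i))) - mkv (\<phi> (L 0))"
      using VVs(2)[of "c (Suc i)"] cnz[of "Suc i"] that VVs(4)[OF Lnz[of "Suc i"] Lnz[of 0]] by simp
    also have "\<dots> = e (Suc i) - e 0" using pl[of "Suc i"] pl[of 0] that by (simp add: L_def e_def)
    finally show ?thesis .
  qed
  have sume: "(\<Sum>r\<le>n. e s r) = (if s \<noteq> k then 1 else 0)" if "s \<le> n" for s
    using that by (simp add: e_def sum.delta)
  have Wgs: "W (gs ! i) j = (if i = j then 1 else 0)" if "i < n" "j < n" for i j
  proof (cases "Suc j = k")
    case True
    have "W (gs ! i) j = - ((\<Sum>r\<le>n. e (Suc i) r) - (\<Sum>r\<le>n. e 0 r))"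
      using True Ve[OF that(1)] by (simp add: W_def T_def sum_subtractf)
    also have "\<dots> = (if i = j then 1 else 0)" using True that by (simp add: sume)
    finally show ?thesis .
  next
    case False
    then show ?thesis using Ve[OF that(1)] by (auto simp: W_def T_def e_def)
  qed
  have rv: "rowv W n x = vec n (W x)" for x
    using rowv_def[where W=W and C=C and n=n and x=x] W_mult W_const W_stein by blast
  have dd: "DD W n xs = (if length xs = n then det (mat\<^sub>r n n (\<lambda>i. rowv W n (xs ! i))) else 0)" for xs
    using DD_def[where W=W and C=C and n=n and xs=xs] W_mult W_const W_stein by blast
  have M: "mat\<^sub>r n n (\<lambda>i. rowv W n (gs ! i)) = 1\<^sub>m n"
    by (rule eq_matI) (auto simp: rv Wgs)
  have "DD W n gs = 1" unfolding dd M using lg by simp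
  then have "nonzero_class_mod_const C gs"
    using nonzero_by_PP[where W=W and C=C and n=n and xs=gs] W_mult W_const W_stein lg by simp
  then show ?thesis unfolding C_def gs_def L_def by simp
qed


theorem lemma5p4:
  fixes a :: "nat \<Rightarrow> 'v::{finite,linorder} option \<Rightarrow> 'a::field"
    and c :: "nat \<Rightarrow> 'a"
    and n :: nat
  assumes n_def: "n = card (UNIV :: 'v set)"
    and hyp: "\<And>i. i \<le> n \<Longrightarrow> \<exists>j. a i j \<noteq> 0"
    and cnz: "\<And>i. 1 \<le> i \<Longrightarrow> i \<le> n \<Longrightarrow> c i \<noteq> 0"
  shows "nonzero_class_mod_const (range (const_fun :: 'a \<Rightarrow> ('v, 'a) mpoly fract))
           (map (\<lambda>i. const_fun (c i) * Fract (lin_form (a i)) (lin_form (a 0))) [1..<n+1])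
         \<longleftrightarrow> lin_indep_vecs n a"
proof
  assume nz: "nonzero_class_mod_const (range (const_fun :: 'a \<Rightarrow> ('v, 'a) mpoly fract))
           (map (\<lambda>i. const_fun (c i) * Fract (lin_form (a i)) (lin_form (a 0))) [1..<n+1])"
  show "lin_indep_vecs n a"
  proof (rule ccontr)
    assume "\<not> lin_indep_vecs n a"
    have "\<not> nonzero_class_mod_const (range (const_fun :: 'a \<Rightarrow> ('v, 'a) mpoly fract))
           (map (\<lambda>i. const_fun (c i) * Fract (lin_form (a i)) (lin_form (a 0))) [1..<n+1])"
      apply (rule dep_dir[where a=a and c=c and n=n])
        apply (erule hyp)
       apply (erule (1) cnz)
      apply fact
      done
    then show False using nz by blast
  qed
next
  assume "lin_indep_vecs n a"
  show "nonzero_class_mod_const (range (const_fun :: 'a \<Rightarrow> ('v, 'a) mpoly fract))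
           (map (\<lambda>i. const_fun (c i) * Fract (lin_form (a i)) (lin_form (a 0))) [1..<n+1])"
    apply (rule indep_dir[where a=a and c=c and n=n])
       apply (rule n_def)
      apply (erule hyp)
     apply (erule (1) cnz)
    apply fact
    done
qed

end
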